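(* Let $A$ be an essential arrangement of affine hyperplanes in a real affine space $V$, $f_0$ a non-constant affine-linear function, and for large $t$ let $A_t=A\cup\{\{f_0=t\}\}$. Let $H=\{f=0\}$ belong to $A$, let $\alpha\in\mathbb C$, let $\Delta$ be a growing domain of $A$, $\Delta_t=\Delta\cap\{f_0<t\}$ the corresponding bounded domain of $A_t$, and $g$ a branch of $f^\alpha$ on $\Delta$. Then $|f|$ is bounded on $\Delta$ if and only if $tr(\Delta)\subset tr(H)$, and this condition is equivalent to $h$ vanishing on $tr(\Delta)$, where $h=f^0/f_0^0$. Moreover, if $|f|$ is bounded on $\Delta$, then for every sufficiently large $t$, $c(g,\Delta_t)=c(g,\Delta,f_0)$.
   Context: Domains and faces are as usual, and a domain is growing if it is unbounded and $f_0\to+\infty$ at infinity within it. In the projective completion $\bar V=V\cup H_\infty$, $tr(H)=\bar H\cap H_\infty$, and $tr(\Delta)$ is the face of highest dimension among faces of $\bar A$ lying in $H_\infty$ contained in $\bar\Delta\cap H_\infty$. $h([v])=f^0(v)/f_0^0(v)$ is defined on $H_\infty\setminus\overline{\{f_0=0\}}$, where $f^0$ is the linear part. The external support of a face $D$ on which $|f|$ is bounded is the face of highest dimension in the set of points of $\bar D$ where $|f|$ is maximal. $c(g,\Delta_t)$ is the value of $g$ on the external support of $\Delta_t$ (in $A_t$) with respect to $f$, and when $|f|$ is bounded on $\Delta$, $c(g,\Delta,f_0)$ is the value of $g$ on the external support of $\Delta$ (in $A$) with respect to $f$. *)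

theory Defs
  imports "HOL-Analysis.Analysis"
begin

text \<open>The real affine space V is modelled as real^'n (any finite dimension).
Points at infinity [v] of the projective completion are represented by the
nonzero vectors v (so subsets of the hyperplane at infinity are represented by
symmetric cones in V - {0}).\<close>

definition affine_fun :: "(real^'n \<Rightarrow> real) \<Rightarrow> bool" where
  "affine_fun f \<longleftrightarrow> (\<exists>a b. f = (\<lambda>x. a \<bullet> x + b))"

definition lin_part :: "(real^'n \<Rightarrow> real) \<Rightarrow> real^'n \<Rightarrow> real" where
  "lin_part f v = f v - f 0"

definition is_hyperplane :: "(real^'n) set \<Rightarrow> bool" where
  "is_hyperplane H \<longleftrightarrow> (\<exists>a b. a \<noteq> 0 \<and> H = {x. a \<bullet> x = b})"

definition arrangement :: "(real^'n) set set \<Rightarrow> bool" where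
  "arrangement A \<longleftrightarrow> finite A \<and> (\<forall>H\<in>A. is_hyperplane H)"

definition lin_hyp :: "(real^'n) set \<Rightarrow> (real^'n) set" where
  "lin_hyp H = {u - w | u w. u \<in> H \<and> w \<in> H}"

definition essential :: "(real^'n) set set \<Rightarrow> bool" where
  "essential A \<longleftrightarrow> \<Inter> (lin_hyp ` A) = {0}"

definition face :: "(real^'n) set set \<Rightarrow> (real^'n) set \<Rightarrow> bool" where
  "face A F \<longleftrightarrow> (\<exists>S\<subseteq>A. F \<in> components (\<Inter> S - \<Union> (A - S)))"

definition domain :: "(real^'n) set set \<Rightarrow> (real^'n) set \<Rightarrow> bool" where
  "domain A D \<longleftrightarrow> D \<in> components (UNIV - \<Union> A)"

definition growing_domain ::
  "(real^'n) set set \<Rightarrow> (real^'n \<Rightarrow> real) \<Rightarrow> (real^'n) set \<Rightarrow> bool" where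
  "growing_domain A f0 D \<longleftrightarrow> domain A D \<and> \<not> bounded D \<and>
     filterlim f0 at_top (inf at_infinity (principal D))"

text \<open>faces of the closure of A lying in the hyperplane at infinity: the faces of the
arrangement induced on H_infinity by the tr(H); such a projective face corresponds to
the cone C \<union> -C where C is a component of a stratum (minus 0) of the central
arrangement of the lin_hyp H.\<close>
definition inf_face :: "(real^'n) set set \<Rightarrow> (real^'n) set \<Rightarrow> bool" where
  "inf_face A T \<longleftrightarrow> (\<exists>S\<subseteq>lin_hyp ` A. \<exists>C \<in> components (\<Inter> S - \<Union> (lin_hyp ` A - S) - {0}).
        T = C \<union> uminus ` C)"

text \<open>tr(H) = closure of H intersected with H_infinity\<close>
definition tr_hyp :: "(real^'n) set \<Rightarrow> (real^'n) set" where
  "tr_hyp H = lin_hyp H - {0}"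

text \<open>closure of D intersected with H_infinity (points [v:0] of the projective closure)\<close>
definition inf_closure :: "(real^'n) set \<Rightarrow> (real^'n) set" where
  "inf_closure D = {v. v \<noteq> 0 \<and> (\<exists>x::nat \<Rightarrow> real^'n. range x \<subseteq> D \<and>
       filterlim (\<lambda>k. norm (x k)) at_top sequentially \<and>
       (((\<lambda>k. x k /\<^sub>R norm (x k)) \<longlonglongrightarrow> v /\<^sub>R norm v) \<or>
        ((\<lambda>k. x k /\<^sub>R norm (x k)) \<longlonglongrightarrow> - (v /\<^sub>R norm v))))}"

definition tr_dom :: "(real^'n) set set \<Rightarrow> (real^'n) set \<Rightarrow> (real^'n) set" where
  "tr_dom A D = (THE T. inf_face A T \<and> T \<subseteq> inf_closure D \<and>
      (\<forall>T'. inf_face A T' \<and> T' \<subseteq> inf_closure D \<longrightarrow> aff_dim T' \<le> aff_dim T))"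

definition h_fun :: "(real^'n \<Rightarrow> real) \<Rightarrow> (real^'n \<Rightarrow> real) \<Rightarrow> real^'n \<Rightarrow> real" where
  "h_fun f f0 v = lin_part f v / lin_part f0 v"

definition h_dom :: "(real^'n \<Rightarrow> real) \<Rightarrow> (real^'n) set" where
  "h_dom f0 = {v. v \<noteq> 0 \<and> lin_part f0 v \<noteq> 0}"

definition branch_pow ::
  "(real^'n \<Rightarrow> real) \<Rightarrow> complex \<Rightarrow> (real^'n) set \<Rightarrow> (real^'n \<Rightarrow> complex) \<Rightarrow> bool" where
  "branch_pow f \<alpha> D g \<longleftrightarrow> (\<exists>L. continuous_on D L \<and>
      (\<forall>x\<in>D. exp (L x) = complex_of_real (f x) \<and> g x = exp (\<alpha> * L x)))"

definition max_set :: "(real^'n \<Rightarrow> real) \<Rightarrow> (real^'n) set \<Rightarrow> (real^'n) set" where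
  "max_set f D = {x \<in> closure D. \<forall>y\<in>closure D. \<bar>f y\<bar> \<le> \<bar>f x\<bar>}"

definition ext_support ::
  "(real^'n) set set \<Rightarrow> (real^'n \<Rightarrow> real) \<Rightarrow> (real^'n) set \<Rightarrow> (real^'n) set" where
  "ext_support A f D = (THE F. face A F \<and> F \<subseteq> max_set f D \<and>
      (\<forall>F'. face A F' \<and> F' \<subseteq> max_set f D \<longrightarrow> aff_dim F' \<le> aff_dim F))"

definition c_val ::
  "(real^'n) set set \<Rightarrow> (real^'n \<Rightarrow> real) \<Rightarrow> (real^'n \<Rightarrow> complex) \<Rightarrow> (real^'n) set \<Rightarrow> complex" where
  "c_val A f g D = (THE z. \<forall>x\<in>ext_support A f D. (g \<longlongrightarrow> z) (at x within D))"

end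

theory Submission
  imports Defs
begin
lemma sign_const:
  fixes a :: "'a::euclidean_space"
  assumes "connected S" "\<forall>x\<in>S. a \<bullet> x \<noteq> b" "x0 \<in> S" "a \<bullet> x0 > b" "x \<in> S"
  shows "a \<bullet> x > b"
proof (rule ccontr)
  assume "\<not> a \<bullet> x > b"
  then have "a \<bullet> x \<le> b" by simp
  from connected_ivt_hyperplane[OF assms(1) assms(5) assms(3) this] assms(4)
  obtain z where "z \<in> S" "a \<bullet> z = b" by force
  with assms(2) show False by blast
qed

lemma hyp_point:
  fixes a :: "'a::euclidean_space"
  assumes "a \<noteq> 0" shows "a \<bullet> ((b / (a \<bullet> a)) *\<^sub>R a) = b"
  using assms by (simp add: inner_scaleR_right)

lemma lin_hyp_eq:
  fixes a :: "real^'n"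
  assumes "a \<noteq> 0" shows "lin_hyp {x. a \<bullet> x = b} = {v. a \<bullet> v = 0}"
proof
  show "lin_hyp {x. a \<bullet> x = b} \<subseteq> {v. a \<bullet> v = 0}"
    by (auto simp: lin_hyp_def inner_diff_right)
  show "{v. a \<bullet> v = 0} \<subseteq> lin_hyp {x. a \<bullet> x = b}"
  proof
    fix v assume "v \<in> {v. a \<bullet> v = 0}"
    then have v: "a \<bullet> v = 0" by simp
    define p where "p = (b / (a \<bullet> a)) *\<^sub>R a"
    have p: "a \<bullet> p = b" unfolding p_def using hyp_point[OF assms] .
    have "v = (v + p) - p" by simp
    moreover have "a \<bullet> (v + p) = b" using v p by (simp add: inner_add_right)
    ultimately show "v \<in> lin_hyp {x. a \<bullet> x = b}" unfolding lin_hyp_def using p by blast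
  qed
qed

lemma orient:
  fixes K :: "(real^'n) set"
  assumes "is_hyperplane K" "connected D" "D \<noteq> {}" "D \<inter> K = {}"
  shows "\<exists>a b. a \<noteq> 0 \<and> K = {x. a \<bullet> x = b} \<and> (\<forall>x\<in>D. a \<bullet> x > b)"
proof -
  obtain a b where ab: "a \<noteq> 0" "K = {x. a \<bullet> x = b}" using assms(1) unfolding is_hyperplane_def by blast
  obtain x0 where x0: "x0 \<in> D" using assms(3) by blast
  have nz: "\<forall>x\<in>D. a \<bullet> x \<noteq> b" using assms(4) ab by blast
  show ?thesis
  proof (cases "a \<bullet> x0 > b")
    case True
    then show ?thesis using sign_const[OF assms(2) nz x0] ab by blast
  next
    case False
    then have "(-a) \<bullet> x0 > -b" using nz x0 by force
    moreover have "\<forall>x\<in>D. (-a) \<bullet> x \<noteq> -b" using nz by simp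
    ultimately have "\<forall>x\<in>D. (-a) \<bullet> x > -b" using sign_const[OF assms(2) _ x0] by blast
    moreover have "K = {x. (-a) \<bullet> x = -b}" using ab by auto
    moreover have "-a \<noteq> 0" using ab by simp
    ultimately show ?thesis by blast
  qed
qed

lemma sign_component:
  fixes X :: "'a::euclidean_space set"
  assumes nz: "\<forall>x\<in>X. \<forall>j\<in>J. a j \<bullet> x \<noteq> b j"
    and C: "C = {x\<in>X. \<forall>j\<in>J. a j \<bullet> x > b j}" and conn: "connected C" and ne: "C \<noteq> {}"
  shows "C \<in> components X"
proof -
  obtain x0 where x0: "x0 \<in> C" using ne by blast
  have x0X: "x0 \<in> X" using x0 C by blast
  let ?Cx = "connected_component_set X x0"
  have "?Cx \<subseteq> C"
  proof
    fix y assume y: "y \<in> ?Cx"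
    have sub: "?Cx \<subseteq> X" by (rule connected_component_subset)
    have cc: "connected ?Cx" by simp
    have x0c: "x0 \<in> ?Cx" using x0X by simp
    have "\<forall>j\<in>J. a j \<bullet> y > b j"
    proof
      fix j assume j: "j \<in> J"
      have "\<forall>x\<in>?Cx. a j \<bullet> x \<noteq> b j" using nz sub j by blast
      moreover have "a j \<bullet> x0 > b j" using x0 C j by blast
      ultimately show "a j \<bullet> y > b j" using sign_const[OF cc _ x0c _ y] by blast
    qed
    then show "y \<in> C" using C y sub by blast
  qed
  moreover have "C \<subseteq> ?Cx"
    by (rule connected_component_maximal[OF x0 conn]) (use C in blast)
  ultimately have "C = ?Cx" by blast
  then show ?thesis using componentsI[OF x0X] by simp
qed

lemma common_strict:
  fixes G :: "'a::real_inner set"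
  assumes fin: "finite J" and cv: "convex G" and ne: "G \<noteq> {}"
    and ge: "\<forall>j\<in>J. \<forall>w\<in>G. a j \<bullet> w \<ge> b j" and ex: "\<forall>j\<in>J. \<exists>w\<in>G. a j \<bullet> w > b j"
  shows "\<exists>z\<in>G. \<forall>j\<in>J. a j \<bullet> z > b j"
  using fin ge ex
proof (induction J rule: finite_induct)
  case empty
  then show ?case using ne by auto
next
  case (insert j J)
  then obtain z where z: "z \<in> G" "\<forall>i\<in>J. a i \<bullet> z > b i" by auto
  obtain w where w: "w \<in> G" "a j \<bullet> w > b j" using insert.prems by auto
  define m where "m = (1/2::real) *\<^sub>R z + (1/2::real) *\<^sub>R w"
  have mG: "m \<in> G" unfolding m_def by (rule convexD[OF cv z(1) w(1)]) auto
  have "\<forall>i\<in>insert j J. a i \<bullet> m > b i"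
  proof
    fix i assume i: "i \<in> insert j J"
    have e: "a i \<bullet> m = (a i \<bullet> z + a i \<bullet> w) / 2" unfolding m_def by (simp add: inner_add_right)
    show "a i \<bullet> m > b i"
    proof (cases "i = j")
      case True
      then have "a i \<bullet> z \<ge> b i" using insert.prems z(1) by blast
      then show ?thesis using e w True by simp
    next
      case False
      then have "i \<in> J" using i by simp
      then have "a i \<bullet> z > b i" "a i \<bullet> w \<ge> b i" using z insert.prems w(1) by auto
      then show ?thesis using e by simp
    qed
  qed
  then show ?case using mG by blast
qed

lemma closed_poly: "closed {x::'a::real_inner. \<forall>i\<in>I. a i \<bullet> x \<ge> b i}"
proof -
  have "{x::'a. \<forall>i\<in>I. a i \<bullet> x \<ge> b i} = (\<Inter>i\<in>I. {x. a i \<bullet> x \<ge> b i})" by auto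
  then show ?thesis by (simp add: closed_INT closed_halfspace_ge)
qed

lemma rec_limit:
  fixes x :: "nat \<Rightarrow> 'a::real_inner"
  assumes P: "\<And>k. a \<bullet> x k \<ge> b" and inf: "filterlim (\<lambda>k. norm (x k)) at_top sequentially"
    and lim: "(\<lambda>k. x k /\<^sub>R norm (x k)) \<longlonglongrightarrow> u"
  shows "a \<bullet> u \<ge> 0"
proof -
  have l1: "(\<lambda>k. a \<bullet> (x k /\<^sub>R norm (x k))) \<longlonglongrightarrow> a \<bullet> u"
    by (intro tendsto_intros lim)
  have l2: "(\<lambda>k. b * inverse (norm (x k))) \<longlonglongrightarrow> b * 0"
    by (intro tendsto_intros tendsto_inverse_0_at_top inf)
  have ev: "eventually (\<lambda>k. norm (x k) > 0) sequentially"
  proof -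
    have "\<forall>Z. \<forall>\<^sub>F k in sequentially. Z < norm (x k)" using inf unfolding filterlim_at_top_dense .
    from this[rule_format, of 0] show ?thesis .
  qed
  have "eventually (\<lambda>k. b * inverse (norm (x k)) \<le> a \<bullet> (x k /\<^sub>R norm (x k))) sequentially"
  proof (rule eventually_mono[OF ev])
    fix k assume k: "norm (x k) > 0"
    have "b * inverse (norm (x k)) \<le> (a \<bullet> x k) * inverse (norm (x k))"
      using P[of k] k by (intro mult_right_mono) auto
    then show "b * inverse (norm (x k)) \<le> a \<bullet> (x k /\<^sub>R norm (x k))"
      by (simp add: inner_scaleR_right divide_inverse mult.commute)
  qed
  from tendsto_le[OF _ l1 l2 this] show ?thesis by simp
qed

lemma min_norm_point:
  fixes S :: "'a::euclidean_space set"
  assumes "closed S" "S \<noteq> {}"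
  obtains x where "x \<in> S" "\<And>y. y \<in> S \<Longrightarrow> norm x \<le> norm y"
  using distance_attains_inf[OF assms, of 0] by (metis dist_0_norm)

lemma key_bound:
  fixes a :: "'i \<Rightarrow> 'a::euclidean_space"
  assumes fin: "finite I"
    and rec: "\<And>u. \<forall>i\<in>I. a i \<bullet> u \<ge> 0 \<Longrightarrow> c \<bullet> u \<le> 0"
  shows "\<exists>B. \<forall>r. (\<exists>x. (\<forall>i\<in>I. a i \<bullet> x \<ge> b i) \<and> c \<bullet> x \<ge> r) \<longrightarrow>
             (\<exists>x. (\<forall>i\<in>I. a i \<bullet> x \<ge> b i) \<and> c \<bullet> x \<ge> r \<and> norm x \<le> B)"
proof (rule ccontr)
  define P where "P = {x. \<forall>i\<in>I. a i \<bullet> x \<ge> b i}"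
  assume "\<not> ?thesis"
  then have neg: "\<forall>B. \<exists>r. (\<exists>x\<in>P. c \<bullet> x \<ge> r) \<and> \<not> (\<exists>x\<in>P. c \<bullet> x \<ge> r \<and> norm x \<le> B)"
    unfolding P_def by blast
  have "\<exists>r. (\<exists>x\<in>P. c \<bullet> x \<ge> r) \<and> (\<forall>x\<in>P. c \<bullet> x \<ge> r \<longrightarrow> norm x > real k)" for k::nat
  proof -
    obtain r where "\<exists>x\<in>P. c \<bullet> x \<ge> r" "\<not> (\<exists>x\<in>P. c \<bullet> x \<ge> r \<and> norm x \<le> real k)"
      using neg by blast
    then show ?thesis by (intro exI[of _ r]) (auto simp: not_le)
  qed
  then obtain r where r: "\<And>k. (\<exists>x\<in>P. c \<bullet> x \<ge> r k)" "\<And>k. \<forall>x\<in>P. c \<bullet> x \<ge> r k \<longrightarrow> norm x > real k"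
    by metis
  define S where "S k = P \<inter> {x. c \<bullet> x \<ge> r k}" for k
  have clS: "closed (S k)" for k
    unfolding S_def P_def by (intro closed_Int closed_poly closed_halfspace_ge)
  have neS: "S k \<noteq> {}" for k using r(1)[of k] unfolding S_def by blast
  have "\<forall>k. \<exists>x. x \<in> S k \<and> (\<forall>y\<in>S k. norm x \<le> norm y)"
    using min_norm_point[OF clS neS] by metis
  then obtain x where x: "\<And>k. x k \<in> S k" "\<And>k y. y \<in> S k \<Longrightarrow> norm (x k) \<le> norm y"
    by metis
  have xP: "x k \<in> P" for k using x(1) unfolding S_def by blast
  have xr: "c \<bullet> x k \<ge> r k" for k using x(1) unfolding S_def by blast
  have xbig: "norm (x k) > real k" for k using r(2) xP xr by blast
  have xpos: "norm (x k) > 0" for k using xbig[of k] by linarith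
  have "\<forall>k. x k /\<^sub>R norm (x k) \<in> sphere 0 1" using xpos by simp
  from seq_compactE[OF compact_imp_seq_compact[OF compact_sphere] this]
  obtain l \<sigma> where l: "l \<in> sphere (0::'a) 1" "strict_mono \<sigma>"
    "((\<lambda>k. x k /\<^sub>R norm (x k)) \<circ> \<sigma>) \<longlonglongrightarrow> l" by blast
  have nl: "norm l = 1" using l(1) by simp
  define y where "y k = x (\<sigma> k)" for k
  have ylim: "(\<lambda>k. y k /\<^sub>R norm (y k)) \<longlonglongrightarrow> l" using l(3) by (simp add: y_def o_def)
  have ybig: "norm (y k) > real k" for k
    using xbig[of "\<sigma> k"] seq_suble[OF l(2), of k] unfolding y_def by linarith
  have yinf: "filterlim (\<lambda>k. norm (y k)) at_top sequentially"
  proof (rule filterlim_at_top_mono[OF filterlim_real_sequentially])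
    show "\<forall>\<^sub>F k in sequentially. real k \<le> norm (y k)" using ybig by (simp add: less_imp_le)
  qed
  have yP: "\<forall>i\<in>I. a i \<bullet> y k \<ge> b i" for k using xP unfolding P_def y_def by blast
  have lrec: "\<forall>i\<in>I. a i \<bullet> l \<ge> 0"
    using rec_limit[OF _ yinf ylim] yP by blast
  then have cl: "c \<bullet> l \<le> 0" using rec by blast
  define I' where "I' = {i\<in>I. a i \<bullet> l > 0}"
  have finI': "finite I'" using fin unfolding I'_def by simp
  have E1: "eventually (\<lambda>k. (y k /\<^sub>R norm (y k)) \<bullet> l > 1/2) sequentially"
  proof -
    have "(\<lambda>k. (y k /\<^sub>R norm (y k)) \<bullet> l) \<longlonglongrightarrow> l \<bullet> l" by (intro tendsto_intros ylim)
    moreover have "l \<bullet> l = 1" using nl by (simp add: dot_square_norm)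
    ultimately show ?thesis by (intro order_tendstoD) auto
  qed
  have E2: "eventually (\<lambda>k. \<forall>i\<in>I'. a i \<bullet> y k > b i) sequentially"
  proof (rule eventually_ball_finite[OF finI'], rule ballI)
    fix i assume i: "i \<in> I'"
    then have ail: "a i \<bullet> l > 0" unfolding I'_def by simp
    have "(\<lambda>k. a i \<bullet> (y k /\<^sub>R norm (y k))) \<longlonglongrightarrow> a i \<bullet> l" by (intro tendsto_intros ylim)
    then have e1: "eventually (\<lambda>k. a i \<bullet> (y k /\<^sub>R norm (y k)) > a i \<bullet> l / 2) sequentially"
      using ail by (intro order_tendstoD) auto
    have "\<forall>Z. \<forall>\<^sub>F k in sequentially. Z < norm (y k)" using yinf unfolding filterlim_at_top_dense .
    from this[rule_format, of "2 * \<bar>b i\<bar> / (a i \<bullet> l)"]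
    have e2: "eventually (\<lambda>k. norm (y k) > 2 * \<bar>b i\<bar> / (a i \<bullet> l)) sequentially" .
    show "eventually (\<lambda>k. a i \<bullet> y k > b i) sequentially"
    proof (rule eventually_mono[OF eventually_conj[OF e1 e2]])
      fix k assume k: "a i \<bullet> (y k /\<^sub>R norm (y k)) > a i \<bullet> l / 2 \<and> norm (y k) > 2 * \<bar>b i\<bar> / (a i \<bullet> l)"
      have ny: "norm (y k) > 0" using ybig[of k] by linarith
      have q1: "a i \<bullet> y k = norm (y k) * (a i \<bullet> (y k /\<^sub>R norm (y k)))"
        using ny by (simp add: inner_scaleR_right)
      have q2: "norm (y k) * (a i \<bullet> (y k /\<^sub>R norm (y k))) > norm (y k) * (a i \<bullet> l / 2)"
        using k ny by (intro mult_strict_left_mono) auto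
      have q3: "norm (y k) * (a i \<bullet> l / 2) > \<bar>b i\<bar>"
      proof -
        have "2 * \<bar>b i\<bar> / (a i \<bullet> l) < norm (y k)" using k by simp
        then have "2 * \<bar>b i\<bar> < norm (y k) * (a i \<bullet> l)" using ail by (simp add: divide_less_eq)
        then show ?thesis by simp
      qed
      show "a i \<bullet> y k > b i" using q1 q2 q3 by linarith
    qed
  qed
  obtain k where k1: "(y k /\<^sub>R norm (y k)) \<bullet> l > 1/2" and k2: "\<forall>i\<in>I'. a i \<bullet> y k > b i"
    using eventually_happens'[OF sequentially_bot eventually_conj[OF E1 E2]] by blast
  define z where "z = y k"
  have nz: "norm z > 0" using ybig[of k] unfolding z_def by linarith
  have zl: "z \<bullet> l > 0"
  proof -
    have "(z /\<^sub>R norm z) \<bullet> l > 0" using k1 unfolding z_def by linarith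
    then have "norm z * ((z /\<^sub>R norm z) \<bullet> l) > 0" using nz by simp
    moreover have "norm z * ((z /\<^sub>R norm z) \<bullet> l) = z \<bullet> l" using nz by simp
    ultimately show ?thesis by linarith
  qed
  define Q where "Q = insert (z \<bullet> l) ((\<lambda>i. (a i \<bullet> z - b i) / (a i \<bullet> l)) ` I')"
  have finQ: "finite Q" unfolding Q_def using finI' by simp
  have Qpos: "\<forall>q\<in>Q. q > 0"
    unfolding Q_def I'_def using zl k2 unfolding z_def I'_def by auto
  define \<epsilon> where "\<epsilon> = Min Q"
  have epos: "\<epsilon> > 0" unfolding \<epsilon>_def using finQ Qpos Q_def by simp
  have ele: "\<epsilon> \<le> q" if "q \<in> Q" for q unfolding \<epsilon>_def using finQ that by simp
  define z' where "z' = z - \<epsilon> *\<^sub>R l"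
  have z'P: "z' \<in> P" unfolding P_def
  proof (clarify)
    fix i assume i: "i \<in> I"
    show "b i \<le> a i \<bullet> z'"
    proof (cases "a i \<bullet> l > 0")
      case True
      then have "i \<in> I'" using i unfolding I'_def by simp
      then have "\<epsilon> \<le> (a i \<bullet> z - b i) / (a i \<bullet> l)" using ele unfolding Q_def by simp
      then have "\<epsilon> * (a i \<bullet> l) \<le> a i \<bullet> z - b i" using True by (simp add: le_divide_eq)
      then show ?thesis unfolding z'_def by (simp add: inner_diff_right)
    next
      case False
      then have "a i \<bullet> l = 0" using lrec i by force
      moreover have "b i \<le> a i \<bullet> z" using yP i unfolding z_def by blast
      ultimately show ?thesis unfolding z'_def by (simp add: inner_diff_right)
    qed
  qed
  have "c \<bullet> z' \<ge> c \<bullet> z" unfolding z'_def using cl epos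
    by (simp add: inner_diff_right mult_nonneg_nonpos)
  then have "c \<bullet> z' \<ge> r (\<sigma> k)" using xr[of "\<sigma> k"] unfolding z_def y_def by linarith
  then have "z' \<in> S (\<sigma> k)" using z'P unfolding S_def by blast
  then have "norm z \<le> norm z'" using x(2) unfolding z_def y_def by blast
  moreover have "(norm z')\<^sup>2 < (norm z)\<^sup>2"
  proof -
    have ll: "l \<bullet> l = 1" using nl by (simp add: dot_square_norm)
    have "(norm z')\<^sup>2 = z' \<bullet> z'" by (simp add: power2_norm_eq_inner)
    also have "z' \<bullet> z' = z \<bullet> z - 2 * \<epsilon> * (z \<bullet> l) + \<epsilon> * \<epsilon> * (l \<bullet> l)"
      unfolding z'_def by (simp add: inner_diff_left inner_diff_right inner_commute algebra_simps)
    also have "\<dots> = (norm z)\<^sup>2 - \<epsilon> * (2 * (z \<bullet> l) - \<epsilon>)"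
      using ll by (simp add: power2_norm_eq_inner algebra_simps)
    finally have eq: "(norm z')\<^sup>2 = (norm z)\<^sup>2 - \<epsilon> * (2 * (z \<bullet> l) - \<epsilon>)" .
    have "\<epsilon> \<le> z \<bullet> l" using ele unfolding Q_def by simp
    then have "2 * (z \<bullet> l) - \<epsilon> > 0" using zl by linarith
    then have "\<epsilon> * (2 * (z \<bullet> l) - \<epsilon>) > 0" using epos by simp
    then show ?thesis using eq by linarith
  qed
  moreover have "(norm z)\<^sup>2 \<le> (norm z')\<^sup>2" if "norm z \<le> norm z'"
    using that by (intro power_mono) auto
  ultimately show False by linarith
qed

lemma key_max:
  fixes a :: "'i \<Rightarrow> 'a::euclidean_space" and b :: "'i \<Rightarrow> real"
  assumes fin: "finite I" and ne: "\<exists>x. \<forall>i\<in>I. a i \<bullet> x \<ge> b i"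
    and rec: "\<And>u. \<forall>i\<in>I. a i \<bullet> u \<ge> 0 \<Longrightarrow> c \<bullet> u \<le> 0"
  shows "\<exists>y. (\<forall>i\<in>I. a i \<bullet> y \<ge> b i) \<and> (\<forall>x. (\<forall>i\<in>I. a i \<bullet> x \<ge> b i) \<longrightarrow> c \<bullet> x \<le> c \<bullet> y)"
proof -
  define P where "P = {x. \<forall>i\<in>I. a i \<bullet> x \<ge> b i}"
  from key_bound[OF fin rec, where b=b] obtain B where
    B0: "\<forall>r. (\<exists>x. (\<forall>i\<in>I. a i \<bullet> x \<ge> b i) \<and> c \<bullet> x \<ge> r) \<longrightarrow>
             (\<exists>x. (\<forall>i\<in>I. a i \<bullet> x \<ge> b i) \<and> c \<bullet> x \<ge> r \<and> norm x \<le> B)"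
    by (rule exE)
  have B: "\<exists>x\<in>P. c \<bullet> x \<ge> r \<and> norm x \<le> B" if "x1 \<in> P" "c \<bullet> x1 \<ge> r" for r x1
  proof -
    have "\<exists>x. (\<forall>i\<in>I. a i \<bullet> x \<ge> b i) \<and> c \<bullet> x \<ge> r"
      using that unfolding P_def by blast
    then obtain x where "(\<forall>i\<in>I. a i \<bullet> x \<ge> b i)" "c \<bullet> x \<ge> r" "norm x \<le> B"
      using B0 by blast
    then show ?thesis unfolding P_def by blast
  qed
  obtain x0 where x0: "x0 \<in> P" using ne unfolding P_def by blast
  let ?K = "P \<inter> cball 0 B"
  have clP: "closed P" unfolding P_def by (rule closed_poly)
  have cK: "compact ?K" by (rule compact_Int_closed[OF compact_cball clP, simplified Int_commute])
  have neK: "?K \<noteq> {}" using B[OF x0 order_refl] by auto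
  have ctK: "continuous_on ?K (\<lambda>x. c \<bullet> x)" by (intro continuous_intros)
  obtain y where y: "y \<in> ?K" "\<forall>z\<in>?K. c \<bullet> z \<le> c \<bullet> y"
    using continuous_attains_sup[OF cK neK ctK] by blast
  have "\<forall>x\<in>P. c \<bullet> x \<le> c \<bullet> y"
  proof
    fix x assume x: "x \<in> P"
    then obtain x' where "x' \<in> P" "c \<bullet> x' \<ge> c \<bullet> x" "norm x' \<le> B" using B[OF x order_refl] by blast
    then have "x' \<in> ?K" by simp
    then have "c \<bullet> x' \<le> c \<bullet> y" using y(2) by blast
    then show "c \<bullet> x \<le> c \<bullet> y" using \<open>c \<bullet> x' \<ge> c \<bullet> x\<close> by linarith
  qed
  then show ?thesis using y(1) unfolding P_def by blast
qed

locale hplanes =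
  fixes A :: "(real^'n) set set" and a :: "(real^'n) set \<Rightarrow> real^'n" and b :: "(real^'n) set \<Rightarrow> real"
  assumes finA: "finite A"
    and anz: "\<And>K. K \<in> A \<Longrightarrow> a K \<noteq> 0"
    and rep: "\<And>K. K \<in> A \<Longrightarrow> K = {x. a K \<bullet> x = b K}"
    and neS: "\<exists>x. \<forall>K\<in>A. a K \<bullet> x > b K"
begin

definition "Str = {x. \<forall>K\<in>A. a K \<bullet> x > b K}"
definition "Wk = {x. \<forall>K\<in>A. a K \<bullet> x \<ge> b K}"
definition "Rc = {u. \<forall>K\<in>A. a K \<bullet> u \<ge> 0}"

lemma Str_ne: "Str \<noteq> {}" using neS unfolding Str_def by blast

lemma convex_Wk: "convex Wk"
proof -
  have "Wk = (\<Inter>K\<in>A. {x. a K \<bullet> x \<ge> b K})" unfolding Wk_def by auto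
  then show ?thesis by (simp add: convex_INT convex_halfspace_ge)
qed

lemma convex_Str: "convex Str"
proof -
  have "Str = (\<Inter>K\<in>A. {x. a K \<bullet> x > b K})" unfolding Str_def by auto
  then show ?thesis by (simp add: convex_INT convex_halfspace_gt)
qed

lemma open_Str: "open Str"
proof -
  have "Str = (\<Inter>K\<in>A. {x. a K \<bullet> x > b K})" unfolding Str_def by auto
  then show ?thesis using finA by (simp add: open_INT open_halfspace_gt)
qed

lemma convex_Rc: "convex Rc"
proof -
  have "Rc = (\<Inter>K\<in>A. {x. a K \<bullet> x \<ge> 0})" unfolding Rc_def by auto
  then show ?thesis by (simp add: convex_INT convex_halfspace_ge)
qed

lemma closed_Wk: "closed Wk"
proof -
  have "Wk = (\<Inter>K\<in>A. {x. a K \<bullet> x \<ge> b K})" unfolding Wk_def by auto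
  then show ?thesis by (simp add: closed_INT closed_halfspace_ge)
qed

lemma memK:
  assumes K: "K \<in> A" shows "(x \<in> K) = (a K \<bullet> x = b K)"
proof -
  have e: "(\<lambda>S. x \<in> S) K = (\<lambda>S. x \<in> S) {x. a K \<bullet> x = b K}" by (rule arg_cong[OF rep[OF K]])
  then show ?thesis by (simp only: mem_Collect_eq)
qed

lemma closure_Str: "closure Str = Wk"
proof
  show "closure Str \<subseteq> Wk"
  proof (rule closure_minimal)
    show "Str \<subseteq> Wk" by (auto simp: Str_def Wk_def less_imp_le)
    show "closed Wk" by (rule closed_Wk)
  qed
  show "Wk \<subseteq> closure Str"
  proof
    fix x assume x: "x \<in> Wk"
    obtain p where p: "p \<in> Str" using Str_ne by blast
    show "x \<in> closure Str" unfolding closure_approachable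
    proof (intro allI impI)
      fix e :: real assume e: "e > 0"
      define t where "t = min 1 (e / (2 * (norm (p - x) + 1)))"
      have n2: "0 < 2 * (norm (p - x) + 1)" using norm_ge_zero[of "p - x"] by (smt (verit))
      have t: "0 < t" "t \<le> 1" unfolding t_def using divide_pos_pos[OF e n2] by auto
      define y where "y = x + t *\<^sub>R (p - x)"
      have "y \<in> Str" unfolding Str_def
      proof (clarify)
        fix K assume K: "K \<in> A"
        have eq: "a K \<bullet> y - b K = (1 - t) * (a K \<bullet> x - b K) + t * (a K \<bullet> p - b K)"
          unfolding y_def by (simp add: inner_add_right inner_diff_right algebra_simps)
        have "(1 - t) * (a K \<bullet> x - b K) \<ge> 0" using t x K unfolding Wk_def by auto
        moreover have "t * (a K \<bullet> p - b K) > 0" using t p K unfolding Str_def by auto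
        ultimately show "b K < a K \<bullet> y" using eq by linarith
      qed
      moreover have "dist y x < e"
      proof -
        have "dist y x = t * norm (p - x)" unfolding y_def dist_norm using t by simp
        also have "\<dots> \<le> (e / (2 * (norm (p - x) + 1))) * norm (p - x)"
          unfolding t_def by (intro mult_right_mono) auto
        also have "\<dots> < e"
        proof -
          have "(e / (2 * (norm (p - x) + 1))) * norm (p - x) = e * (norm (p - x) / (2 * (norm (p - x) + 1)))"
            by simp
          moreover have "norm (p - x) / (2 * (norm (p - x) + 1)) < 1"
          proof -
            have "norm (p - x) < 2 * (norm (p - x) + 1)" using norm_ge_zero[of "p - x"] by (smt (verit))
            then show ?thesis using divide_less_eq_1_pos[OF n2] by simp
          qed
          ultimately show ?thesis using e by (metis mult.right_neutral mult_strict_left_mono)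
        qed
        finally show ?thesis .
      qed
      ultimately show "\<exists>y\<in>Str. dist y x < e" by blast
    qed
  qed
qed

lemma affine_hyp:
  assumes K: "K \<in> A" shows "affine K"
  by (subst rep[OF K]) (rule affine_hyperplane)

lemma ext_face:
  fixes c :: "real^'n"
  assumes yW: "y \<in> Wk" and ymax: "\<forall>x\<in>Wk. c \<bullet> x \<le> c \<bullet> y"
  defines "G \<equiv> {x\<in>Wk. \<forall>z\<in>Wk. c \<bullet> z \<le> c \<bullet> x}"
  shows "\<exists>F. F \<noteq> {} \<and> F \<subseteq> G \<and>
     (THE F. face A F \<and> F \<subseteq> G \<and> (\<forall>F'. face A F' \<and> F' \<subseteq> G \<longrightarrow> aff_dim F' \<le> aff_dim F)) = F"
proof -
  have G: "G = {x\<in>Wk. c \<bullet> x = c \<bullet> y}" unfolding G_def using yW ymax by (auto intro: antisym)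
  have yG: "y \<in> G" unfolding G using yW by simp
  have cvG: "convex G"
  proof -
    have "G = Wk \<inter> {x. c \<bullet> x = c \<bullet> y}" unfolding G by auto
    then show ?thesis by (simp add: convex_Int convex_Wk convex_hyperplane)
  qed
  define S0 where "S0 = {K\<in>A. G \<subseteq> K}"
  define L0 where "L0 = \<Inter>S0"
  define J where "J = A - S0"
  have finJ: "finite J" unfolding J_def using finA by simp
  have S0A: "S0 \<subseteq> A" unfolding S0_def by blast
  have GL0: "G \<subseteq> L0" unfolding L0_def S0_def by blast
  have affL0: "affine L0" unfolding L0_def using affine_hyp S0A by (intro affine_Inter) blast
  have Jge: "\<forall>K\<in>J. \<forall>w\<in>G. a K \<bullet> w \<ge> b K" unfolding J_def G Wk_def by blast
  have Jwit: "\<forall>K\<in>J. \<exists>w\<in>G. a K \<bullet> w > b K"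
  proof
    fix K assume K: "K \<in> J"
    then have "\<not> G \<subseteq> K" "K \<in> A" unfolding J_def S0_def by auto
    then obtain w where w: "w \<in> G" "w \<notin> K" by blast
    then have "a K \<bullet> w \<noteq> b K" using memK[OF \<open>K \<in> A\<close>] by blast
    moreover have "a K \<bullet> w \<ge> b K" using Jge K w by blast
    ultimately show "\<exists>w\<in>G. a K \<bullet> w > b K" using w by force
  qed
  obtain z where z: "z \<in> G" "\<forall>K\<in>J. a K \<bullet> z > b K"
    using common_strict[OF finJ cvG _ Jge Jwit] yG by blast
  define F0 where "F0 = {x\<in>L0. \<forall>K\<in>J. a K \<bullet> x > b K}"
  have zF0: "z \<in> F0" unfolding F0_def using z GL0 by blast
  have F0W: "F0 \<subseteq> Wk"
  proof
    fix x assume x: "x \<in> F0"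
    show "x \<in> Wk" unfolding Wk_def
    proof (intro CollectI ballI)
      fix K assume K: "K \<in> A"
      show "a K \<bullet> x \<ge> b K"
      proof (cases "K \<in> S0")
        case True
        then have "x \<in> K" using x unfolding F0_def L0_def by blast
        then show ?thesis using memK[OF K] by simp
      next
        case False
        then show ?thesis using x K unfolding F0_def J_def by (auto intro: less_imp_le)
      qed
    qed
  qed
  have openF0: "openin (top_of_set L0) F0"
  proof -
    have "F0 = L0 \<inter> (\<Inter>K\<in>J. {x. a K \<bullet> x > b K})" unfolding F0_def by auto
    moreover have "open (\<Inter>K\<in>J. {x. a K \<bullet> x > b K})"
      using finJ by (simp add: open_INT open_halfspace_gt)
    ultimately show ?thesis by (simp add: openin_open_Int)
  qed
  have cL0: "\<forall>w\<in>L0. c \<bullet> w = c \<bullet> y"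
  proof
    fix w assume w: "w \<in> L0"
    obtain e where e: "e > 0" "\<forall>x'\<in>L0. dist x' z < e \<longrightarrow> x' \<in> F0"
      using openF0 zF0 unfolding openin_euclidean_subtopology_iff by blast
    define d where "d = w - z"
    define \<delta> where "\<delta> = e / (2 * (norm d + 1))"
    have d2: "0 < 2 * (norm d + 1)" using norm_ge_zero[of d] by (smt (verit))
    have dpos: "\<delta> > 0" unfolding \<delta>_def using e(1) d2 by (rule divide_pos_pos)
    have dsmall: "\<delta> * norm d < e"
    proof -
      have "\<delta> * norm d = e * (norm d / (2 * (norm d + 1)))" unfolding \<delta>_def by simp
      moreover have "norm d / (2 * (norm d + 1)) < 1"
      proof -
        have "norm d < 2 * (norm d + 1)" using norm_ge_zero[of d] by (smt (verit))
        then show ?thesis using divide_less_eq_1_pos[OF d2] by simp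
      qed
      ultimately show ?thesis using e by (metis mult.right_neutral mult_strict_left_mono)
    qed
    have zL0: "z \<in> L0" using zF0 unfolding F0_def by blast
    have x1: "z + \<delta> *\<^sub>R d \<in> L0"
    proof -
      have "(1 - \<delta>) *\<^sub>R z + \<delta> *\<^sub>R w \<in> L0"
        by (rule affL0[unfolded affine_def, rule_format, OF zL0 w]) simp
      moreover have "(1 - \<delta>) *\<^sub>R z + \<delta> *\<^sub>R w = z + \<delta> *\<^sub>R d" unfolding d_def by (simp add: algebra_simps)
      ultimately show ?thesis by simp
    qed
    have x2: "z - \<delta> *\<^sub>R d \<in> L0"
    proof -
      have "(1 + \<delta>) *\<^sub>R z + (- \<delta>) *\<^sub>R w \<in> L0"
        by (rule affL0[unfolded affine_def, rule_format, OF zL0 w]) simp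
      moreover have "(1 + \<delta>) *\<^sub>R z + (- \<delta>) *\<^sub>R w = z - \<delta> *\<^sub>R d" unfolding d_def by (simp add: algebra_simps)
      ultimately show ?thesis by simp
    qed
    have "dist (z + \<delta> *\<^sub>R d) z < e" "dist (z - \<delta> *\<^sub>R d) z < e"
      using dsmall dpos by (auto simp: dist_norm)
    then have "z + \<delta> *\<^sub>R d \<in> Wk" "z - \<delta> *\<^sub>R d \<in> Wk" using e x1 x2 F0W by auto
    then have "c \<bullet> (z + \<delta> *\<^sub>R d) \<le> c \<bullet> y" "c \<bullet> (z - \<delta> *\<^sub>R d) \<le> c \<bullet> y" using ymax by auto
    moreover have "c \<bullet> z = c \<bullet> y" using z(1) unfolding G by simp
    ultimately have "\<delta> * (c \<bullet> d) \<le> 0" "\<delta> * (c \<bullet> d) \<ge> 0"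
      by (auto simp: inner_add_right inner_diff_right)
    then have "c \<bullet> d = 0" using dpos by (simp add: mult_le_0_iff zero_le_mult_iff) 
    then show "c \<bullet> w = c \<bullet> y" using \<open>c \<bullet> z = c \<bullet> y\<close> unfolding d_def by (simp add: inner_diff_right)
  qed
  have F0G: "F0 \<subseteq> G" using F0W cL0 unfolding G F0_def by blast
  define X where "X = \<Inter>S0 - \<Union>(A - S0)"
  have F0X: "F0 = {x\<in>X. \<forall>K\<in>J. a K \<bullet> x > b K}"
  proof
    show "F0 \<subseteq> {x\<in>X. \<forall>K\<in>J. a K \<bullet> x > b K}"
    proof
      fix x assume x: "x \<in> F0"
      have "x \<notin> \<Union>(A - S0)"
      proof
        assume "x \<in> \<Union>(A - S0)"
        then obtain K where K: "K \<in> J" "x \<in> K" unfolding J_def by blast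
        have "a K \<bullet> x > b K" using x K(1) unfolding F0_def by blast
        moreover have "a K \<bullet> x = b K" using memK[of K] K unfolding J_def by blast
        ultimately show False by simp
      qed
      then show "x \<in> {x\<in>X. \<forall>K\<in>J. a K \<bullet> x > b K}" using x unfolding X_def F0_def L0_def by blast
    qed
  qed (auto simp: X_def F0_def L0_def)
  have F0ne: "F0 \<noteq> {}" using zF0 by blast
  have cvF0: "convex F0"
  proof -
    have "F0 = L0 \<inter> (\<Inter>K\<in>J. {x. a K \<bullet> x > b K})" unfolding F0_def by auto
    then show ?thesis
      by (simp only:) (intro convex_Int convex_INT affine_imp_convex[OF affL0] convex_halfspace_gt)
  qed
  have nzX: "\<forall>x\<in>X. \<forall>K\<in>J. a K \<bullet> x \<noteq> b K"
    using memK unfolding X_def J_def by blast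
  have F0comp: "F0 \<in> components X"
    using sign_component[OF nzX F0X convex_connected[OF cvF0] F0ne] .
  have faceF0: "face A F0" unfolding face_def using S0A F0comp X_def by blast
  have dimF0: "aff_dim F0 = aff_dim L0" by (rule aff_dim_openin[OF openF0 affL0 F0ne])
  have uniq: "aff_dim F' \<le> aff_dim F0 \<and> (aff_dim F' = aff_dim F0 \<longrightarrow> F' = F0)"
    if F': "face A F'" "F' \<subseteq> G" for F'
  proof -
    obtain S' where S': "S' \<subseteq> A" "F' \<in> components (\<Inter>S' - \<Union>(A - S'))"
      using F'(1) unfolding face_def by blast
    have F'ne: "F' \<noteq> {}" using in_components_nonempty[OF S'(2)] .
    have F'sub: "F' \<subseteq> \<Inter>S' - \<Union>(A - S')" using in_components_subset[OF S'(2)] .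
    have F'L0: "F' \<subseteq> L0" using F'(2) GL0 by blast
    have le: "aff_dim F' \<le> aff_dim F0" using aff_dim_subset[OF F'L0] dimF0 by simp
    moreover have "F' = F0" if eq: "aff_dim F' = aff_dim F0"
    proof -
      have "affine hull F' = L0"
        by (rule affine_dim_equal) (auto simp: F'ne eq dimF0 affL0 hull_minimal[of F' L0 affine, OF F'L0 affL0])
      moreover have "affine hull F' \<subseteq> \<Inter>S'"
        using F'sub S'(1) affine_hyp by (intro hull_minimal) (auto intro!: affine_Inter)
      ultimately have L0S': "L0 \<subseteq> \<Inter>S'" by simp
      have "S' \<subseteq> S0"
      proof
        fix K assume K: "K \<in> S'"
        then have "L0 \<subseteq> K" using L0S' by blast
        then show "K \<in> S0" using GL0 K S'(1) unfolding S0_def by blast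
      qed
      moreover have "S0 \<subseteq> S'"
      proof
        fix K assume K: "K \<in> S0"
        obtain v where v: "v \<in> F'" using F'ne by blast
        have "v \<in> K" using v F'L0 K unfolding L0_def by blast
        then show "K \<in> S'" using v F'sub K S0A by blast
      qed
      ultimately have SS: "S' = S0" by blast
      have F'comp: "F' \<in> components X" using S'(2) SS unfolding X_def by simp
      have "F' \<subseteq> F0"
      proof
        fix v assume v: "v \<in> F'"
        have "v \<in> Wk" using v F'(2) unfolding G by blast
        moreover have "v \<notin> \<Union>(A - S0)" using v F'sub SS by blast
        ultimately have "\<forall>K\<in>J. a K \<bullet> v > b K"
          using memK unfolding Wk_def J_def by force
        then show "v \<in> F0" using v F'L0 unfolding F0_def by blast
      qed
      then show "F' = F0" using components_eq[OF F'comp F0comp] F'ne by blast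
    qed
    ultimately show ?thesis by blast
  qed
  have "(THE F. face A F \<and> F \<subseteq> G \<and> (\<forall>F'. face A F' \<and> F' \<subseteq> G \<longrightarrow> aff_dim F' \<le> aff_dim F)) = F0"
  proof (rule the_equality)
    show "face A F0 \<and> F0 \<subseteq> G \<and> (\<forall>F'. face A F' \<and> F' \<subseteq> G \<longrightarrow> aff_dim F' \<le> aff_dim F0)"
      using faceF0 F0G uniq by blast
    fix F assume F: "face A F \<and> F \<subseteq> G \<and> (\<forall>F'. face A F' \<and> F' \<subseteq> G \<longrightarrow> aff_dim F' \<le> aff_dim F)"
    then have "aff_dim F0 \<le> aff_dim F" using faceF0 F0G by blast
    then show "F = F0" using uniq[of F] F by force
  qed
  then show ?thesis using F0ne F0G by blast
qed

end

context hplanes begin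

lemma lin_hyp_A:
  assumes K: "K \<in> A" shows "lin_hyp K = {v. a K \<bullet> v = 0}"
proof -
  have "lin_hyp K = lin_hyp {x. a K \<bullet> x = b K}" using arg_cong[OF rep[OF K], of lin_hyp] .
  also have "\<dots> = {v. a K \<bullet> v = 0}" using lin_hyp_eq[OF anz[OF K]] .
  finally show ?thesis .
qed

lemma closed_Rc: "closed Rc"
proof -
  have "Rc = (\<Inter>K\<in>A. {x. a K \<bullet> x \<ge> 0})" unfolding Rc_def by auto
  then show ?thesis by (simp add: closed_INT closed_halfspace_ge)
qed

lemma zero_Rc: "0 \<in> Rc" unfolding Rc_def by simp

lemma tr_face:
  assumes ess: "\<Inter>(lin_hyp ` A) = {0}" and Rne: "Rc \<noteq> {0}"
  defines "IC \<equiv> {v. v \<noteq> 0 \<and> (v \<in> Rc \<or> -v \<in> Rc)}"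
  shows "\<exists>C0. C0 \<noteq> {} \<and> C0 \<subseteq> Rc \<and> 0 \<notin> C0 \<and>
     (\<forall>c. (\<forall>v\<in>C0. c \<bullet> v = 0) \<longrightarrow> (\<forall>u\<in>Rc. c \<bullet> u = 0)) \<and>
     (THE T. inf_face A T \<and> T \<subseteq> IC \<and> (\<forall>T'. inf_face A T' \<and> T' \<subseteq> IC \<longrightarrow> aff_dim T' \<le> aff_dim T))
        = C0 \<union> uminus ` C0"
proof -
  define LA where "LA = lin_hyp ` A"
  have subL: "subspace L" if "L \<in> LA" for L
    using that lin_hyp_A subspace_hyperplane unfolding LA_def by auto
  have symL: "-v \<in> L" if "L \<in> LA" "v \<in> L" for L v
    using subspace_neg[OF subL[OF that(1)] that(2)] .
  define S0 where "S0 = {L\<in>LA. Rc \<subseteq> L}"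
  define L0 where "L0 = \<Inter>S0"
  define J where "J = {K\<in>A. lin_hyp K \<notin> S0}"
  have finJ: "finite J" unfolding J_def using finA by simp
  have S0LA: "S0 \<subseteq> LA" unfolding S0_def by blast
  have subL0: "subspace L0" unfolding L0_def using subL S0LA by (intro subspace_Inter) blast
  have affL0: "affine L0" using subspace_imp_affine[OF subL0] .
  have symL0: "-v \<in> L0" if "v \<in> L0" for v using subspace_neg[OF subL0 that] .
  have RcL0: "Rc \<subseteq> L0" unfolding L0_def S0_def by blast
  have Jne: "J \<noteq> {}"
  proof
    assume "J = {}"
    then have "\<forall>K\<in>A. Rc \<subseteq> lin_hyp K" unfolding J_def S0_def LA_def by blast
    then have "Rc \<subseteq> \<Inter>(lin_hyp ` A)" by blast
    then have "Rc \<subseteq> {0}" using ess by simp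
    then show False using Rne zero_Rc by blast
  qed
  have Jge: "\<forall>K\<in>J. \<forall>w\<in>Rc. a K \<bullet> w \<ge> 0" unfolding J_def Rc_def by blast
  have Jwit: "\<forall>K\<in>J. \<exists>w\<in>Rc. a K \<bullet> w > 0"
  proof
    fix K assume K: "K \<in> J"
    then have KA: "K \<in> A" and "lin_hyp K \<notin> S0" unfolding J_def by auto
    then have "\<not> Rc \<subseteq> lin_hyp K" unfolding S0_def LA_def by blast
    then obtain w where w: "w \<in> Rc" "a K \<bullet> w \<noteq> 0" using lin_hyp_A[OF KA] by blast
    then show "\<exists>w\<in>Rc. a K \<bullet> w > 0" using Jge K by force
  qed
  obtain z where z: "z \<in> Rc" "\<forall>K\<in>J. a K \<bullet> z > 0"
    using common_strict[OF finJ convex_Rc _ Jge Jwit] zero_Rc by blast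
  define C0 where "C0 = {v\<in>L0. \<forall>K\<in>J. a K \<bullet> v > 0}"
  define C0' where "C0' = {v\<in>L0. \<forall>K\<in>J. (- a K) \<bullet> v > 0}"
  have zC0: "z \<in> C0" unfolding C0_def using z RcL0 by blast
  have C0ne: "C0 \<noteq> {}" using zC0 by blast
  have C0Rc: "C0 \<subseteq> Rc"
  proof
    fix v assume v: "v \<in> C0"
    show "v \<in> Rc" unfolding Rc_def
    proof (intro CollectI ballI)
      fix K assume K: "K \<in> A"
      show "a K \<bullet> v \<ge> 0"
      proof (cases "K \<in> J")
        case True then show ?thesis using v unfolding C0_def by (auto intro: less_imp_le)
      next
        case False
        then have "lin_hyp K \<in> S0" using K unfolding J_def by blast
        then have "v \<in> lin_hyp K" using v unfolding C0_def L0_def by blast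
        then show ?thesis using lin_hyp_A[OF K] by simp
      qed
    qed
  qed
  obtain K0 where K0: "K0 \<in> J" using Jne by blast
  have C0nz: "0 \<notin> C0" unfolding C0_def using K0 by auto
  have C0'nz: "0 \<notin> C0'" unfolding C0'_def using K0 by auto
  define Y0 where "Y0 = \<Inter>S0 - \<Union>(LA - S0) - {0}"
  have nzY: "\<forall>v\<in>Y0. \<forall>K\<in>J. a K \<bullet> v \<noteq> 0"
  proof (intro ballI)
    fix v K assume v: "v \<in> Y0" and K: "K \<in> J"
    then have "lin_hyp K \<in> LA - S0" unfolding J_def LA_def by blast
    then have "v \<notin> lin_hyp K" using v unfolding Y0_def by blast
    then show "a K \<bullet> v \<noteq> 0" using lin_hyp_A K unfolding J_def by auto
  qed
  have nzY': "\<forall>v\<in>Y0. \<forall>K\<in>J. (- a K) \<bullet> v \<noteq> 0" using nzY by simp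
  have notinLA: "v \<notin> \<Union>(LA - S0)" if "\<forall>K\<in>J. a K \<bullet> v \<noteq> 0" for v
  proof
    assume "v \<in> \<Union>(LA - S0)"
    then obtain K where K: "K \<in> A" "lin_hyp K \<notin> S0" "v \<in> lin_hyp K" unfolding LA_def by blast
    then have "K \<in> J" unfolding J_def by blast
    then show False using that K lin_hyp_A by auto
  qed
  have C0Y: "C0 = {v\<in>Y0. \<forall>K\<in>J. a K \<bullet> v > 0}"
  proof
    show "C0 \<subseteq> {v\<in>Y0. \<forall>K\<in>J. a K \<bullet> v > 0}"
    proof
      fix v assume v: "v \<in> C0"
      then have "v \<notin> \<Union>(LA - S0)" using notinLA unfolding C0_def by force
      then show "v \<in> {v\<in>Y0. \<forall>K\<in>J. a K \<bullet> v > 0}" using v C0nz unfolding C0_def Y0_def L0_def by auto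
    qed
  qed (auto simp: C0_def Y0_def L0_def)
  have C0'Y: "C0' = {v\<in>Y0. \<forall>K\<in>J. (- a K) \<bullet> v > 0}"
  proof
    show "C0' \<subseteq> {v\<in>Y0. \<forall>K\<in>J. (- a K) \<bullet> v > 0}"
    proof
      fix v assume v: "v \<in> C0'"
      then have "\<forall>K\<in>J. a K \<bullet> v \<noteq> 0" unfolding C0'_def by force
      then have "v \<notin> \<Union>(LA - S0)" using notinLA by blast
      then show "v \<in> {v\<in>Y0. \<forall>K\<in>J. (- a K) \<bullet> v > 0}" using v C0'nz unfolding C0'_def Y0_def L0_def by auto
    qed
  qed (auto simp: C0'_def Y0_def L0_def)
  have cvC0: "convex C0"
  proof -
    have "C0 = L0 \<inter> (\<Inter>K\<in>J. {x. a K \<bullet> x > 0})" unfolding C0_def by auto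
    then show ?thesis
      by (simp only:) (intro convex_Int convex_INT affine_imp_convex[OF affL0] convex_halfspace_gt)
  qed
  have cvC0': "convex C0'"
  proof -
    have "C0' = L0 \<inter> (\<Inter>K\<in>J. {x. (- a K) \<bullet> x > 0})" unfolding C0'_def by auto
    then show ?thesis
      by (simp only:) (intro convex_Int convex_INT affine_imp_convex[OF affL0] convex_halfspace_gt)
  qed
  have negC0: "uminus ` C0 = C0'"
  proof
    show "uminus ` C0 \<subseteq> C0'" using symL0 unfolding C0_def C0'_def by auto
    show "C0' \<subseteq> uminus ` C0"
    proof
      fix v assume v: "v \<in> C0'"
      then have "-v \<in> C0" using symL0 unfolding C0_def C0'_def by auto
      then show "v \<in> uminus ` C0" by (metis image_eqI minus_minus)
    qed
  qed
  have C0'ne: "C0' \<noteq> {}" using C0ne negC0 by blast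
  have C0comp: "C0 \<in> components Y0"
    using sign_component[OF nzY C0Y convex_connected[OF cvC0] C0ne] .
  have C0'comp: "C0' \<in> components Y0"
    using sign_component[OF nzY' C0'Y convex_connected[OF cvC0'] C0'ne] .
  define T0 where "T0 = C0 \<union> uminus ` C0"
  have T0face: "inf_face A T0"
    unfolding inf_face_def T0_def using S0LA C0comp unfolding Y0_def LA_def by blast
  have RcIC: "Rc - {0} \<subseteq> IC" unfolding IC_def by blast
  have T0IC: "T0 \<subseteq> IC"
    unfolding T0_def IC_def using C0Rc C0nz by auto
  have openC0: "openin (top_of_set L0) C0"
  proof -
    have "C0 = L0 \<inter> (\<Inter>K\<in>J. {x. a K \<bullet> x > 0})" unfolding C0_def by auto
    moreover have "open (\<Inter>K\<in>J. {x. a K \<bullet> x > 0})"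
      using finJ by (simp add: open_INT open_halfspace_gt)
    ultimately show ?thesis by (simp add: openin_open_Int)
  qed
  have dimC0: "aff_dim C0 = aff_dim L0" by (rule aff_dim_openin[OF openC0 affL0 C0ne])
  have ICL0: "IC \<subseteq> L0" unfolding IC_def using RcL0 symL0 by force
  have T0L0: "T0 \<subseteq> L0" using T0IC ICL0 by blast
  have dimT0: "aff_dim T0 = aff_dim L0"
    using aff_dim_subset[OF T0L0] aff_dim_subset[of C0 T0] dimC0 unfolding T0_def by force
  have C0L0: "C0 \<subseteq> L0" unfolding C0_def by blast
  have hullC0: "affine hull C0 = L0"
    by (rule affine_dim_equal) (use C0ne dimC0 affL0 hull_minimal[of C0 L0 affine, OF C0L0 affL0] in auto)
  have span: "\<forall>c. (\<forall>v\<in>C0. c \<bullet> v = 0) \<longrightarrow> (\<forall>u\<in>Rc. c \<bullet> u = 0)"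
  proof (intro allI impI)
    fix c assume c: "\<forall>v\<in>C0. c \<bullet> v = 0"
    have "affine hull C0 \<subseteq> {v. c \<bullet> v = 0}"
      using c by (intro hull_minimal) (auto simp: affine_hyperplane)
    then show "\<forall>u\<in>Rc. c \<bullet> u = 0" using hullC0 RcL0 by blast
  qed
  define B where "B = {u. \<forall>K\<in>A. (- a K) \<bullet> u \<ge> 0}"
  have closedB: "closed B"
  proof -
    have "B = (\<Inter>K\<in>A. {x. (- a K) \<bullet> x \<ge> 0})" unfolding B_def by auto
    then show ?thesis by (simp only:) (intro closed_INT ballI closed_halfspace_ge)
  qed
  have uniq: "aff_dim T \<le> aff_dim T0 \<and> (aff_dim T = aff_dim T0 \<longrightarrow> T = T0)"
    if T: "inf_face A T" "T \<subseteq> IC" for T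
  proof -
    obtain S C where S: "S \<subseteq> LA" "C \<in> components (\<Inter>S - \<Union>(LA - S) - {0})" "T = C \<union> uminus ` C"
      using T(1) unfolding inf_face_def LA_def by blast
    have Cne: "C \<noteq> {}" using in_components_nonempty[OF S(2)] .
    have Csub: "C \<subseteq> \<Inter>S - \<Union>(LA - S) - {0}" using in_components_subset[OF S(2)] .
    have TL0: "T \<subseteq> L0" using T(2) ICL0 by blast
    have le: "aff_dim T \<le> aff_dim T0" using aff_dim_subset[OF TL0] dimT0 by simp
    moreover have "T = T0" if eq: "aff_dim T = aff_dim T0"
    proof -
      have Tne: "T \<noteq> {}" using Cne S(3) by blast
      have "affine hull T = L0"
        by (rule affine_dim_equal) (auto simp: Tne eq dimT0 affL0 hull_minimal[of T L0 affine, OF TL0 affL0])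
      moreover have "affine hull T \<subseteq> \<Inter>S"
      proof (rule hull_minimal)
        show "T \<subseteq> \<Inter>S"
        proof
          fix v assume "v \<in> T"
          then consider "v \<in> C" | "-v \<in> C" using S(3) by force
          then show "v \<in> \<Inter>S"
          proof cases
            case 1 then show ?thesis using Csub by blast
          next
            case 2
            show ?thesis
            proof
              fix L assume L: "L \<in> S"
              have "-v \<in> L" using 2 Csub L by blast
              then have "- (- v) \<in> L" using symL S(1) L by blast
              then show "v \<in> L" by simp
            qed
          qed
        qed
        show "affine (\<Inter>S)" using S(1) subL subspace_imp_affine by (intro affine_Inter) blast
      qed
      ultimately have L0S: "L0 \<subseteq> \<Inter>S" by simp
      have "S \<subseteq> S0"
      proof
        fix L assume L: "L \<in> S"
        then have "L0 \<subseteq> L" using L0S by blast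
        then show "L \<in> S0" using RcL0 L S(1) unfolding S0_def by blast
      qed
      moreover have "S0 \<subseteq> S"
      proof
        fix L assume L: "L \<in> S0"
        obtain v where v: "v \<in> C" using Cne by blast
        have "v \<in> L0" using v TL0 S(3) by blast
        then have "v \<in> L" using L unfolding L0_def by blast
        then show "L \<in> S" using v Csub L S0LA by blast
      qed
      ultimately have SS: "S = S0" by blast
      have Ccomp: "C \<in> components Y0" using S(2) SS unfolding Y0_def by simp
      have CY0: "C \<subseteq> Y0" using in_components_subset[OF Ccomp] .
      have CL0: "C \<subseteq> L0" using TL0 S(3) by blast
      have CRB: "C \<subseteq> Rc \<union> B"
      proof
        fix v assume "v \<in> C"
        then have "v \<in> IC" using T(2) S(3) by blast
        then show "v \<in> Rc \<union> B" unfolding IC_def Rc_def B_def by auto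
      qed
      have disj: "Rc \<inter> B \<inter> C = {}"
      proof -
        have "v = 0" if "v \<in> Rc" "v \<in> B" for v
        proof -
          have "\<forall>K\<in>A. a K \<bullet> v = 0" using that unfolding Rc_def B_def by (auto intro: antisym)
          then have "v \<in> \<Inter>(lin_hyp ` A)" using lin_hyp_A by auto
          then show "v = 0" using ess by blast
        qed
        then show ?thesis using Csub by blast
      qed
      have conn: "connected C" using in_components_connected[OF Ccomp] .
      have "Rc \<inter> C = {} \<or> B \<inter> C = {}"
        using conn CRB disj closed_Rc closedB unfolding connected_closed by blast
      then show "T = T0"
      proof
        assume "B \<inter> C = {}"
        then have CRc: "C \<subseteq> Rc" using CRB by blast
        have "C \<subseteq> C0"
        proof
          fix v assume v: "v \<in> C"
          have "\<forall>K\<in>J. a K \<bullet> v > 0"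
            using nzY CY0 v CRc Jge by (metis less_eq_real_def subsetD)
          then show "v \<in> C0" using CL0 v unfolding C0_def by blast
        qed
        then have "C = C0" using components_eq[OF Ccomp C0comp] Cne by blast
        then show "T = T0" using S(3) unfolding T0_def by simp
      next
        assume "Rc \<inter> C = {}"
        then have CB: "C \<subseteq> B" using CRB by blast
        have "C \<subseteq> C0'"
        proof
          fix v assume v: "v \<in> C"
          have "\<forall>K\<in>J. (- a K) \<bullet> v \<ge> 0" using CB v unfolding B_def J_def by blast
          then have "\<forall>K\<in>J. (- a K) \<bullet> v > 0"
            using nzY' CY0 v by (metis less_eq_real_def subsetD)
          then show "v \<in> C0'" using CL0 v unfolding C0'_def by blast
        qed
        then have "C = C0'" using components_eq[OF Ccomp C0'comp] Cne by blast
        then have "C = uminus ` C0" using negC0 by simp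
        moreover have "uminus ` uminus ` C0 = C0" by (simp add: image_image)
        ultimately show "T = T0" using S(3) unfolding T0_def by auto
      qed
    qed
    ultimately show ?thesis by blast
  qed
  have "(THE T. inf_face A T \<and> T \<subseteq> IC \<and> (\<forall>T'. inf_face A T' \<and> T' \<subseteq> IC \<longrightarrow> aff_dim T' \<le> aff_dim T)) = T0"
  proof (rule the_equality)
    show "inf_face A T0 \<and> T0 \<subseteq> IC \<and> (\<forall>T'. inf_face A T' \<and> T' \<subseteq> IC \<longrightarrow> aff_dim T' \<le> aff_dim T0)"
      using T0face T0IC uniq by blast
    fix T assume T: "inf_face A T \<and> T \<subseteq> IC \<and> (\<forall>T'. inf_face A T' \<and> T' \<subseteq> IC \<longrightarrow> aff_dim T' \<le> aff_dim T)"
    then have "aff_dim T0 \<le> aff_dim T" using T0face T0IC by blast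
    then show "T = T0" using uniq[of T] T by force
  qed
  then show ?thesis using C0ne C0Rc C0nz span unfolding T0_def by blast
qed

end

lemma unbounded_dir:
  fixes S :: "'a::euclidean_space set"
  assumes "\<not> bounded S"
  obtains x l where "\<And>k. x k \<in> S" "filterlim (\<lambda>k. norm (x k)) at_top sequentially"
     "(\<lambda>k. x k /\<^sub>R norm (x k)) \<longlonglongrightarrow> l" "norm l = 1"
proof -
  have "\<forall>k::nat. \<exists>x\<in>S. norm x > real k" using assms unfolding bounded_iff by (meson not_le)
  then obtain x where x: "\<And>k. x k \<in> S" "\<And>k. norm (x k) > real k" by metis
  have pos: "norm (x k) > 0" for k using x(2)[of k] by linarith
  have "\<forall>k. x k /\<^sub>R norm (x k) \<in> sphere 0 1" using pos by simp
  from seq_compactE[OF compact_imp_seq_compact[OF compact_sphere] this]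
  obtain l \<sigma> where l: "l \<in> sphere (0::'a) 1" "strict_mono \<sigma>"
    "((\<lambda>k. x k /\<^sub>R norm (x k)) \<circ> \<sigma>) \<longlonglongrightarrow> l" by blast
  define y where "y k = x (\<sigma> k)" for k
  have ylim: "(\<lambda>k. y k /\<^sub>R norm (y k)) \<longlonglongrightarrow> l" using l(3) by (simp add: y_def o_def)
  have ybig: "norm (y k) > real k" for k
    using x(2)[of "\<sigma> k"] seq_suble[OF l(2), of k] unfolding y_def by linarith
  have yinf: "filterlim (\<lambda>k. norm (y k)) at_top sequentially"
  proof (rule filterlim_at_top_mono[OF filterlim_real_sequentially])
    show "\<forall>\<^sub>F k in sequentially. real k \<le> norm (y k)" using ybig by (simp add: less_imp_le)
  qed
  show ?thesis using that[of y l] x(1) yinf ylim l(1) unfolding y_def by simp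
qed

lemma normalize_scale:
  fixes w :: "'a::real_normed_vector"
  assumes c: "c > 0"
  shows "(c *\<^sub>R w) /\<^sub>R norm (c *\<^sub>R w) = w /\<^sub>R norm w"
proof (cases "w = 0")
  case True then show ?thesis by simp
next
  case False
  have n: "norm (c *\<^sub>R w) = c * norm w" using c by simp
  have "(c *\<^sub>R w) /\<^sub>R norm (c *\<^sub>R w) = (inverse (c * norm w) * c) *\<^sub>R w" unfolding n by simp
  also have "inverse (c * norm w) * c = inverse (norm w)" using c False by (simp add: field_simps)
  finally show ?thesis by simp
qed

lemma ray_lim:
  fixes p v :: "'a::real_normed_vector"
  assumes v: "v \<noteq> 0"
  shows "filterlim (\<lambda>k. norm (p + real k *\<^sub>R v)) at_top sequentially"
    and "(\<lambda>k. (p + real k *\<^sub>R v) /\<^sub>R norm (p + real k *\<^sub>R v)) \<longlonglongrightarrow> v /\<^sub>R norm v"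
proof -
  have nv: "norm v > 0" using v by simp
  have "filterlim (\<lambda>k. norm v * real k) at_top sequentially"
    by (rule filterlim_tendsto_pos_mult_at_top[OF tendsto_const nv filterlim_real_sequentially])
  then have "filterlim (\<lambda>k. - norm p + norm v * real k) at_top sequentially"
    by (rule filterlim_tendsto_add_at_top[OF tendsto_const])
  moreover have "\<forall>\<^sub>F k in sequentially. - norm p + norm v * real k \<le> norm (p + real k *\<^sub>R v)"
  proof (rule always_eventually, rule allI)
    fix k
    have "norm (real k *\<^sub>R v) - norm p \<le> norm (p + real k *\<^sub>R v)"
      using norm_diff_ineq[of "real k *\<^sub>R v" p] by (simp add: add.commute)
    then show "- norm p + norm v * real k \<le> norm (p + real k *\<^sub>R v)" by (simp add: mult.commute)
  qed
  ultimately show "filterlim (\<lambda>k. norm (p + real k *\<^sub>R v)) at_top sequentially"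
    by (rule filterlim_at_top_mono)
  have i0: "(\<lambda>k. inverse (real k)) \<longlonglongrightarrow> 0"
    by (rule tendsto_inverse_0_at_top[OF filterlim_real_sequentially])
  have "(\<lambda>k. inverse (real k) *\<^sub>R p + v) \<longlonglongrightarrow> 0 *\<^sub>R p + v"
    by (intro tendsto_intros i0)
  then have w: "(\<lambda>k. inverse (real k) *\<^sub>R p + v) \<longlonglongrightarrow> v" by simp
  have "(\<lambda>k. (inverse (real k) *\<^sub>R p + v) /\<^sub>R norm (inverse (real k) *\<^sub>R p + v)) \<longlonglongrightarrow> v /\<^sub>R norm v"
    using w nv by (intro tendsto_intros) auto
  moreover have "\<forall>\<^sub>F k in sequentially.
      (inverse (real k) *\<^sub>R p + v) /\<^sub>R norm (inverse (real k) *\<^sub>R p + v)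
      = (p + real k *\<^sub>R v) /\<^sub>R norm (p + real k *\<^sub>R v)"
  proof (rule eventually_sequentiallyI[of 1])
    fix k :: nat assume k: "1 \<le> k"
    then have kp: "real k > 0" by simp
    have "p + real k *\<^sub>R v = real k *\<^sub>R (inverse (real k) *\<^sub>R p + v)"
      using kp by (simp add: scaleR_right_distrib)
    then show "(inverse (real k) *\<^sub>R p + v) /\<^sub>R norm (inverse (real k) *\<^sub>R p + v)
      = (p + real k *\<^sub>R v) /\<^sub>R norm (p + real k *\<^sub>R v)"
      using normalize_scale[OF kp, of "inverse (real k) *\<^sub>R p + v"] by simp
  qed
  ultimately show "(\<lambda>k. (p + real k *\<^sub>R v) /\<^sub>R norm (p + real k *\<^sub>R v)) \<longlonglongrightarrow> v /\<^sub>R norm v"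
    by (rule Lim_transform_eventually)
qed

lemma growing_dir:
  fixes c0 :: "'a::real_inner"
  assumes gr: "filterlim f0 at_top (inf at_infinity (principal D))"
    and ray: "\<And>k. p + real k *\<^sub>R u \<in> D" and u: "u \<noteq> 0" and f0: "f0 = (\<lambda>x. c0 \<bullet> x + d0)"
  shows "c0 \<bullet> u > 0"
proof (rule ccontr)
  assume neg: "\<not> c0 \<bullet> u > 0"
  define x where "x k = p + real k *\<^sub>R u" for k
  have "filterlim x at_infinity sequentially"
    unfolding filterlim_at_infinity_conv_norm_at_top x_def using ray_lim(1)[OF u] .
  moreover have "filterlim x (principal D) sequentially"
    unfolding filterlim_principal x_def using ray by simp
  ultimately have "filterlim x (inf at_infinity (principal D)) sequentially"
    by (simp add: filterlim_inf)
  then have "filterlim (\<lambda>k. f0 (x k)) at_top sequentially"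
    by (rule filterlim_compose[OF gr])
  then have "\<forall>Z. \<forall>\<^sub>F k in sequentially. Z < f0 (x k)" unfolding filterlim_at_top_dense .
  from this[rule_format, of "c0 \<bullet> p + d0"]
  obtain k where "c0 \<bullet> p + d0 < f0 (x k)"
    using eventually_happens'[OF sequentially_bot] by blast
  moreover have "f0 (x k) = c0 \<bullet> p + d0 + real k * (c0 \<bullet> u)"
    unfolding f0 x_def by (simp add: inner_add_right)
  moreover have "real k * (c0 \<bullet> u) \<le> 0" using neg by (simp add: mult_nonneg_nonpos)
  ultimately show False by linarith
qed

lemma branch_const:
  fixes f :: "'a::topological_space \<Rightarrow> real" and L :: "'a \<Rightarrow> complex"
  assumes D: "connected D" and L: "continuous_on D L" and eL: "\<forall>x\<in>D. exp (L x) = complex_of_real (f x)"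
    and fc: "continuous_on D f" and sgn: "\<forall>x\<in>D. s * f x > 0" and s: "s = 1 \<or> s = -1"
  shows "\<exists>w0. \<forall>x\<in>D. L x = complex_of_real (ln \<bar>f x\<bar>) + w0"
proof -
  define \<phi> where "\<phi> x = L x - complex_of_real (ln \<bar>f x\<bar>)" for x
  have fnz: "f x \<noteq> 0" if "x \<in> D" for x using sgn that by force
  have ratio: "f x / \<bar>f x\<bar> = s" if "x \<in> D" for x
    using s sgn that by (auto simp: abs_if zero_less_mult_iff)
  have ephi: "exp (\<phi> x) = complex_of_real s" if x: "x \<in> D" for x
  proof -
    have "exp (\<phi> x) = exp (L x) / exp (complex_of_real (ln \<bar>f x\<bar>))"
      unfolding \<phi>_def by (simp add: exp_diff)
    also have "exp (complex_of_real (ln \<bar>f x\<bar>)) = complex_of_real \<bar>f x\<bar>"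
    proof -
      have "exp (complex_of_real (ln \<bar>f x\<bar>)) = complex_of_real (exp (ln \<bar>f x\<bar>))"
        by (rule exp_of_real)
      also have "exp (ln \<bar>f x\<bar>) = \<bar>f x\<bar>" using fnz[OF x] by simp
      finally show ?thesis .
    qed
    finally have "exp (\<phi> x) = complex_of_real (f x) / complex_of_real \<bar>f x\<bar>" using eL x by simp
    also have "\<dots> = complex_of_real (f x / \<bar>f x\<bar>)" by simp
    finally show ?thesis using ratio[OF x] by simp
  qed
  have cphi: "continuous_on D \<phi>"
  proof -
    have "continuous_on D (\<lambda>x. \<bar>f x\<bar>)" using fc by (rule continuous_on_rabs)
    then have "continuous_on D (\<lambda>x. ln \<bar>f x\<bar>)"
      using fnz by (intro continuous_on_ln) auto
    then have "continuous_on D (\<lambda>x. complex_of_real (ln \<bar>f x\<bar>))" by simp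
    then show ?thesis unfolding \<phi>_def by (rule continuous_on_diff[OF L])
  qed
  have disc: "\<exists>e>0. \<forall>y. y \<in> D \<and> \<phi> y \<noteq> \<phi> x \<longrightarrow> e \<le> norm (\<phi> y - \<phi> x)" if x: "x \<in> D" for x
  proof (intro exI[of _ 1] conjI allI impI)
    fix y assume y: "y \<in> D \<and> \<phi> y \<noteq> \<phi> x"
    have "exp (\<phi> y) = exp (\<phi> x)" using ephi x y by simp
    then obtain n :: int where n: "\<phi> y = \<phi> x + (of_int (2 * n) * pi) * \<i>" unfolding exp_eq by blast
    have "n \<noteq> 0" using n y by auto
    then have n1: "\<bar>real_of_int n\<bar> \<ge> 1" by linarith
    have "norm (\<phi> y - \<phi> x) = \<bar>2 * real_of_int n\<bar> * pi"
      using n by (simp add: norm_mult)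
    also have "\<dots> \<ge> 2 * pi" using n1 pi_gt_zero by (simp add: abs_mult)
    finally show "1 \<le> norm (\<phi> y - \<phi> x)" using pi_gt3 by linarith
  qed simp
  have "\<phi> constant_on D"
    by (rule continuous_discrete_range_constant[OF D cphi disc])
  then obtain w0 where "\<forall>x\<in>D. \<phi> x = w0" unfolding constant_on_def by blast
  then have "L x = complex_of_real (ln \<bar>f x\<bar>) + w0" if "x \<in> D" for x
  proof -
    have "L x - complex_of_real (ln \<bar>f x\<bar>) = w0" using that \<open>\<forall>x\<in>D. \<phi> x = w0\<close> unfolding \<phi>_def by blast
    then show ?thesis by (simp add: diff_eq_eq add.commute)
  qed
  then show ?thesis by blast
qed

theorem lemma8:
  fixes A :: "(real^'n) set set" and f0 f :: "real^'n \<Rightarrow> real"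
    and \<alpha> :: complex and D :: "(real^'n) set" and g :: "real^'n \<Rightarrow> complex"
  assumes "arrangement A" and "essential A"
    and "affine_fun f0" and "\<exists>x y. f0 x \<noteq> f0 y"
    and "affine_fun f" and "{x. f x = 0} \<in> A"
    and "growing_domain A f0 D"
    and "branch_pow f \<alpha> D g"
  shows "(bounded ((\<lambda>x. \<bar>f x\<bar>) ` D) \<longleftrightarrow> tr_dom A D \<subseteq> tr_hyp {x. f x = 0})
    \<and> (tr_dom A D \<subseteq> tr_hyp {x. f x = 0} \<longleftrightarrow>
         (tr_dom A D \<subseteq> h_dom f0 \<and> (\<forall>v\<in>tr_dom A D. h_fun f f0 v = 0)))
    \<and> (bounded ((\<lambda>x. \<bar>f x\<bar>) ` D) \<longrightarrow>
         (\<forall>\<^sub>F t in at_top.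
            c_val (insert {x. f0 x = t} A) f g {x \<in> D. f0 x < t} = c_val A f g D))"
proof -
  obtain cf df where fdef: "f = (\<lambda>x. cf \<bullet> x + df)" using assms(5) unfolding affine_fun_def by blast
  obtain c0 d0 where f0def: "f0 = (\<lambda>x. c0 \<bullet> x + d0)" using assms(3) unfolding affine_fun_def by blast
  define H where "H = {x. f x = 0}"
  have HA: "H \<in> A" using assms(6) unfolding H_def .
  have finA: "finite A" and hypA: "\<forall>K\<in>A. is_hyperplane K"
    using assms(1) unfolding arrangement_def by auto
  have c0nz: "c0 \<noteq> 0"
  proof
    assume "c0 = 0"
    then have "\<forall>x y. f0 x = f0 y" using f0def by simp
    then show False using assms(4) by blast
  qed
  have cfnz: "cf \<noteq> 0"
  proof
    assume cf0: "cf = 0"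
    obtain a' b' where ab': "a' \<noteq> 0" "H = {x. a' \<bullet> x = b'}"
      using hypA HA unfolding is_hyperplane_def by blast
    have Hc: "H = {x. df = 0}" unfolding H_def fdef cf0 by simp
    show False
    proof (cases "df = 0")
      case True
      then have "0 \<in> H" "a' \<in> H" using Hc by auto
      then have "a' \<bullet> a' = 0" using ab'(2) by auto
      then show False using ab'(1) by simp
    next
      case False
      have "(b' / (a' \<bullet> a')) *\<^sub>R a' \<in> H" using ab' hyp_point[OF ab'(1)] by simp
      then show False using Hc False by simp
    qed
  qed
  have Heq: "H = {x. cf \<bullet> x = - df}" unfolding H_def fdef by (auto simp: algebra_simps)
  have Hlin: "lin_hyp H = {v. cf \<bullet> v = 0}" unfolding Heq by (rule lin_hyp_eq[OF cfnz])
  have trH: "tr_hyp H = {v. cf \<bullet> v = 0} - {0}" unfolding tr_hyp_def Hlin ..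
  have lpf: "lin_part f v = cf \<bullet> v" for v unfolding lin_part_def fdef by simp
  have lpf0: "lin_part f0 v = c0 \<bullet> v" for v unfolding lin_part_def f0def by simp
  have domD: "D \<in> components (UNIV - \<Union>A)" and unbD: "\<not> bounded D"
    and grow: "filterlim f0 at_top (inf at_infinity (principal D))"
    using assms(7) unfolding growing_domain_def domain_def by auto
  have Dne: "D \<noteq> {}" using in_components_nonempty[OF domD] .
  have Dconn: "connected D" using in_components_connected[OF domD] .
  have Dsub: "D \<subseteq> UNIV - \<Union>A" using in_components_subset[OF domD] .
  have "\<forall>K\<in>A. \<exists>ab. fst ab \<noteq> 0 \<and> K = {x. fst ab \<bullet> x = snd ab} \<and> (\<forall>x\<in>D. fst ab \<bullet> x > snd ab)"
  proof
    fix K assume K: "K \<in> A"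
    have DK: "D \<inter> K = {}" using Dsub K by blast
    have hK: "is_hyperplane K" using hypA K by blast
    have "\<exists>a b. a \<noteq> 0 \<and> K = {x. a \<bullet> x = b} \<and> (\<forall>x\<in>D. a \<bullet> x > b)"
      by (rule orient[OF hK Dconn Dne DK])
    then obtain a' b' where ab': "a' \<noteq> 0 \<and> K = {x. a' \<bullet> x = b'} \<and> (\<forall>x\<in>D. a' \<bullet> x > b')"
      by (elim exE)
    show "\<exists>ab. fst ab \<noteq> 0 \<and> K = {x. fst ab \<bullet> x = snd ab} \<and> (\<forall>x\<in>D. fst ab \<bullet> x > snd ab)"
      by (rule exI[of _ "(a', b')"]) (unfold fst_conv snd_conv, rule ab')
  qed
  then obtain h where h: "\<forall>K\<in>A. fst (h K) \<noteq> 0 \<and> K = {x. fst (h K) \<bullet> x = snd (h K)} \<and> (\<forall>x\<in>D. fst (h K) \<bullet> x > snd (h K))"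
    by (rule bchoice[THEN exE])
  define a where "a K = fst (h K)" for K
  define b where "b K = snd (h K)" for K
  have ab: "\<forall>K\<in>A. a K \<noteq> 0 \<and> K = {x. a K \<bullet> x = b K} \<and> (\<forall>x\<in>D. a K \<bullet> x > b K)"
    using h unfolding a_def b_def .
  obtain p where pD: "p \<in> D" using Dne by blast
  interpret H0: hplanes A a b
  proof
    show "finite A" by (rule finA)
    show "\<And>K. K \<in> A \<Longrightarrow> a K \<noteq> 0" using ab by blast
    show "\<And>K. K \<in> A \<Longrightarrow> K = {x. a K \<bullet> x = b K}" using ab by blast
    show "\<exists>x. \<forall>K\<in>A. a K \<bullet> x > b K" using ab pD by blast
  qed
  have DS1: "D \<subseteq> H0.Str" using ab unfolding H0.Str_def by blast
  have DStr: "D = H0.Str"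
  proof
    show "D \<subseteq> H0.Str" by (rule DS1)
    show "H0.Str \<subseteq> D"
    proof (rule components_maximal[OF domD])
      show "connected H0.Str" using convex_connected[OF H0.convex_Str] .
      show "H0.Str \<subseteq> UNIV - \<Union>A" using H0.memK unfolding H0.Str_def by fastforce
      show "D \<inter> H0.Str \<noteq> {}" using pD DS1 by blast
    qed
  qed
  have clD: "closure D = H0.Wk" using H0.closure_Str DStr by simp
  have DWk: "D \<subseteq> H0.Wk" using clD closure_subset by blast
  have pS: "\<forall>K\<in>A. a K \<bullet> p > b K" using pD DStr unfolding H0.Str_def by blast
  have rayD: "p + real k *\<^sub>R u \<in> D" if u: "u \<in> H0.Rc" for u k
  proof -
    have "\<forall>K\<in>A. a K \<bullet> (p + real k *\<^sub>R u) > b K"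
    proof
      fix K assume K: "K \<in> A"
      have "a K \<bullet> u \<ge> 0" using u K unfolding H0.Rc_def by blast
      then have k0: "real k * (a K \<bullet> u) \<ge> 0" by simp
      have "a K \<bullet> p > b K" using pS K by blast
      then show "a K \<bullet> (p + real k *\<^sub>R u) > b K" using k0 by (simp add: inner_add_right)
    qed
    then show ?thesis using DStr unfolding H0.Str_def by blast
  qed
  have xW: "\<forall>K\<in>A. a K \<bullet> x \<ge> b K" if "x \<in> D" for x using that DWk unfolding H0.Wk_def by blast
  have Rne: "H0.Rc \<noteq> {0}"
  proof
    assume R0: "H0.Rc = {0}"
    obtain x l where xl: "\<And>k. x k \<in> D" "filterlim (\<lambda>k. norm (x k)) at_top sequentially"
       "(\<lambda>k. x k /\<^sub>R norm (x k)) \<longlonglongrightarrow> l" "norm l = 1"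
      using unbounded_dir[OF unbD] by blast
    have "l \<in> H0.Rc" unfolding H0.Rc_def
    proof (intro CollectI ballI)
      fix K assume K: "K \<in> A"
      show "a K \<bullet> l \<ge> 0" using rec_limit[OF _ xl(2) xl(3)] xW xl(1) K by blast
    qed
    then show False using R0 xl(4) by simp
  qed
  have ess: "\<Inter>(lin_hyp ` A) = {0}" using assms(2) unfolding essential_def .
  define IC where "IC = {v. v \<noteq> 0 \<and> (v \<in> H0.Rc \<or> -v \<in> H0.Rc)}"
  have icD: "inf_closure D = IC"
  proof
    show "inf_closure D \<subseteq> IC"
    proof
      fix v assume "v \<in> inf_closure D"
      then obtain x where v0: "v \<noteq> 0" and x: "range x \<subseteq> D" "filterlim (\<lambda>k. norm (x k)) at_top sequentially"
        and lim: "(\<lambda>k. x k /\<^sub>R norm (x k)) \<longlonglongrightarrow> v /\<^sub>R norm v \<or>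
                  (\<lambda>k. x k /\<^sub>R norm (x k)) \<longlonglongrightarrow> - (v /\<^sub>R norm v)"
        unfolding inf_closure_def by blast
      have xWk: "\<forall>K\<in>A. a K \<bullet> x k \<ge> b K" for k using x(1) xW by blast
      have nv: "inverse (norm v) > 0" using v0 by simp
      from lim show "v \<in> IC"
      proof
        assume l: "(\<lambda>k. x k /\<^sub>R norm (x k)) \<longlonglongrightarrow> v /\<^sub>R norm v"
        have "\<forall>K\<in>A. a K \<bullet> v \<ge> 0"
        proof
          fix K assume K: "K \<in> A"
          have "a K \<bullet> (v /\<^sub>R norm v) \<ge> 0" using rec_limit[OF _ x(2) l] xWk K by blast
          then have "inverse (norm v) * (a K \<bullet> v) \<ge> 0" by simp
          then show "a K \<bullet> v \<ge> 0" using nv by (simp add: zero_le_mult_iff)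
        qed
        then show ?thesis unfolding IC_def H0.Rc_def using v0 by blast
      next
        assume l: "(\<lambda>k. x k /\<^sub>R norm (x k)) \<longlonglongrightarrow> - (v /\<^sub>R norm v)"
        have "\<forall>K\<in>A. a K \<bullet> (-v) \<ge> 0"
        proof
          fix K assume K: "K \<in> A"
          have "a K \<bullet> (- (v /\<^sub>R norm v)) \<ge> 0" using rec_limit[OF _ x(2) l] xWk K by blast
          then have h: "inverse (norm v) * (a K \<bullet> (-v)) \<ge> 0" by (simp only: inner_scaleR_right inner_minus_right scaleR_minus_right)
          show "a K \<bullet> (-v) \<ge> 0"
          proof (rule ccontr)
            assume "\<not> a K \<bullet> (-v) \<ge> 0"
            then have "a K \<bullet> (-v) < 0" by linarith
            from mult_pos_neg[OF nv this] h show False by linarith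
          qed
        qed
        then show ?thesis unfolding IC_def H0.Rc_def using v0 by blast
      qed
    qed
    show "IC \<subseteq> inf_closure D"
    proof
      fix v assume v: "v \<in> IC"
      then have v0: "v \<noteq> 0" unfolding IC_def by blast
      from v consider "v \<in> H0.Rc" | "-v \<in> H0.Rc" unfolding IC_def by blast
      then show "v \<in> inf_closure D"
      proof cases
        case 1
        define x where "x k = p + real k *\<^sub>R v" for k
        have "range x \<subseteq> D" using rayD[OF 1] unfolding x_def by blast
        then show ?thesis unfolding inf_closure_def using ray_lim[OF v0, of p] v0 unfolding x_def by blast
      next
        case 2
        define x where "x k = p + real k *\<^sub>R (-v)" for k
        have v0': "-v \<noteq> 0" using v0 by simp
        have "range x \<subseteq> D" using rayD[OF 2] unfolding x_def by blast
        moreover have "(\<lambda>k. x k /\<^sub>R norm (x k)) \<longlonglongrightarrow> - (v /\<^sub>R norm v)"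
          using ray_lim(2)[OF v0', of p] unfolding x_def by simp
        moreover have "filterlim (\<lambda>k. norm (x k)) at_top sequentially"
          using ray_lim(1)[OF v0', of p] unfolding x_def .
        ultimately show ?thesis unfolding inf_closure_def using v0 by blast
      qed
    qed
  qed
  obtain C0 where C0: "C0 \<noteq> {}" "C0 \<subseteq> H0.Rc" "0 \<notin> C0"
      "\<forall>c. (\<forall>v\<in>C0. c \<bullet> v = 0) \<longrightarrow> (\<forall>u\<in>H0.Rc. c \<bullet> u = 0)"
    and T: "(THE T. inf_face A T \<and> T \<subseteq> IC \<and> (\<forall>T'. inf_face A T' \<and> T' \<subseteq> IC \<longrightarrow> aff_dim T' \<le> aff_dim T))
        = C0 \<union> uminus ` C0"
    using H0.tr_face[OF ess Rne] unfolding IC_def by blast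
  have trD: "tr_dom A D = C0 \<union> uminus ` C0"
    unfolding tr_dom_def icD using T .
  have posC0: "\<forall>v\<in>C0. c0 \<bullet> v > 0"
  proof
    fix v assume v: "v \<in> C0"
    have "v \<in> H0.Rc" "v \<noteq> 0" using v C0(2,3) by auto
    then show "c0 \<bullet> v > 0" using growing_dir[OF grow rayD _ f0def] by blast
  qed
  have zero_tr: "0 \<notin> tr_dom A D" unfolding trD using C0(3) by force
  have P2a: "tr_dom A D \<subseteq> h_dom f0"
  proof
    fix v assume v: "v \<in> tr_dom A D"
    have "c0 \<bullet> v \<noteq> 0" using v posC0 unfolding trD by force
    then show "v \<in> h_dom f0" using v zero_tr unfolding h_dom_def lpf0 by force
  qed
  have hz: "h_fun f f0 v = 0 \<longleftrightarrow> cf \<bullet> v = 0" if v: "v \<in> tr_dom A D" for v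
  proof -
    have "c0 \<bullet> v \<noteq> 0" using P2a v unfolding h_dom_def lpf0 by blast
    then show ?thesis unfolding h_fun_def lpf lpf0 by simp
  qed
  have trsub: "tr_dom A D \<subseteq> tr_hyp H \<longleftrightarrow> (\<forall>v\<in>C0. cf \<bullet> v = 0)"
    unfolding trH trD using C0(3) by force
  have part2: "tr_dom A D \<subseteq> tr_hyp H \<longleftrightarrow>
      (tr_dom A D \<subseteq> h_dom f0 \<and> (\<forall>v\<in>tr_dom A D. h_fun f f0 v = 0))"
  proof -
    have "tr_dom A D \<subseteq> tr_hyp H \<longleftrightarrow> (\<forall>v\<in>tr_dom A D. cf \<bullet> v = 0)"
      unfolding trH using zero_tr by blast
    then show ?thesis using P2a hz by blast
  qed
  have bnd_iff: "bounded ((\<lambda>x. \<bar>f x\<bar>) ` D) \<longleftrightarrow> (\<forall>u\<in>H0.Rc. cf \<bullet> u = 0)"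
  proof
    assume bd: "bounded ((\<lambda>x. \<bar>f x\<bar>) ` D)"
    then obtain B where B: "\<forall>x\<in>D. \<bar>f x\<bar> \<le> B" unfolding bounded_real by auto
    show "\<forall>u\<in>H0.Rc. cf \<bullet> u = 0"
    proof (rule ccontr)
      assume "\<not> (\<forall>u\<in>H0.Rc. cf \<bullet> u = 0)"
      then obtain u where u: "u \<in> H0.Rc" "cf \<bullet> u \<noteq> 0" by blast
      have cu: "\<bar>cf \<bullet> u\<bar> > 0" using u(2) by simp
      define k where "k = nat \<lceil>(B + \<bar>f p\<bar>) / \<bar>cf \<bullet> u\<bar>\<rceil> + 1"
      have "real k > (B + \<bar>f p\<bar>) / \<bar>cf \<bullet> u\<bar>" unfolding k_def by linarith
      then have kb: "real k * \<bar>cf \<bullet> u\<bar> > B + \<bar>f p\<bar>" using cu by (simp add: divide_less_eq)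
      have "\<bar>f (p + real k *\<^sub>R u)\<bar> \<le> B" using B rayD[OF u(1)] by blast
      moreover have "f (p + real k *\<^sub>R u) = f p + real k * (cf \<bullet> u)"
        unfolding fdef by (simp add: inner_add_right)
      moreover have "\<bar>real k * (cf \<bullet> u)\<bar> = real k * \<bar>cf \<bullet> u\<bar>" by (simp add: abs_mult)
      ultimately show False using kb by linarith
    qed
  next
    assume z: "\<forall>u\<in>H0.Rc. cf \<bullet> u = 0"
    have ne: "\<exists>x. \<forall>K\<in>A. a K \<bullet> x \<ge> b K" using xW pD by blast
    obtain y1 where y1: "\<forall>K\<in>A. a K \<bullet> y1 \<ge> b K" "\<forall>x. (\<forall>K\<in>A. a K \<bullet> x \<ge> b K) \<longrightarrow> cf \<bullet> x \<le> cf \<bullet> y1"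
      using key_max[OF finA ne, of cf] z unfolding H0.Rc_def by force
    obtain y2 where y2: "\<forall>K\<in>A. a K \<bullet> y2 \<ge> b K" "\<forall>x. (\<forall>K\<in>A. a K \<bullet> x \<ge> b K) \<longrightarrow> (-cf) \<bullet> x \<le> (-cf) \<bullet> y2"
      using key_max[OF finA ne, of "-cf"] z unfolding H0.Rc_def by force
    show "bounded ((\<lambda>x. \<bar>f x\<bar>) ` D)" unfolding bounded_real
    proof (intro exI[of _ "\<bar>f y1\<bar> + \<bar>f y2\<bar>"] ballI)
      fix r assume "r \<in> (\<lambda>x. \<bar>f x\<bar>) ` D"
      then obtain x where x: "x \<in> D" "r = \<bar>f x\<bar>" by blast
      have "cf \<bullet> x \<le> cf \<bullet> y1" "(-cf) \<bullet> x \<le> (-cf) \<bullet> y2" using y1 y2 xW[OF x(1)] by blast+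
      then show "\<bar>r\<bar> \<le> \<bar>f y1\<bar> + \<bar>f y2\<bar>" unfolding x(2) fdef by simp
    qed
  qed
  have part1: "bounded ((\<lambda>x. \<bar>f x\<bar>) ` D) \<longleftrightarrow> tr_dom A D \<subseteq> tr_hyp H"
    unfolding bnd_iff trsub using C0(2,4) by blast
  have part3: "bounded ((\<lambda>x. \<bar>f x\<bar>) ` D) \<longrightarrow>
         (\<forall>\<^sub>F t in at_top. c_val (insert {x. f0 x = t} A) f g {x \<in> D. f0 x < t} = c_val A f g D)"
  proof
    assume bd: "bounded ((\<lambda>x. \<bar>f x\<bar>) ` D)"
    have z: "\<forall>u\<in>H0.Rc. cf \<bullet> u = 0" using bnd_iff bd by blast
    have fnz: "\<forall>x\<in>D. cf \<bullet> x \<noteq> - df"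
    proof
      fix x assume x: "x \<in> D"
      show "cf \<bullet> x \<noteq> - df"
      proof
        assume "cf \<bullet> x = - df"
        then have "x \<in> H" unfolding Heq by simp
        then show False using x Dsub HA by blast
      qed
    qed
    obtain s :: real where s: "s = 1 \<or> s = -1" "\<forall>x\<in>D. s * f x > 0"
    proof (cases "cf \<bullet> p > - df")
      case True
      then have "\<forall>x\<in>D. cf \<bullet> x > - df" using sign_const[OF Dconn fnz pD] by blast
      then have "\<forall>x\<in>D. 1 * f x > 0" unfolding fdef by force
      then show ?thesis using that by blast
    next
      case False
      then have "(-cf) \<bullet> p > df" using fnz pD by force
      moreover have "\<forall>x\<in>D. (-cf) \<bullet> x \<noteq> df" using fnz by force
      ultimately have "\<forall>x\<in>D. (-cf) \<bullet> x > df" using sign_const[OF Dconn _ pD] by blast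
      then have "\<forall>x\<in>D. (-1) * f x > 0" unfolding fdef by force
      then show ?thesis using that by blast
    qed
    define cs where "cs = s *\<^sub>R cf"
    have sf: "s * f x = cs \<bullet> x + s * df" for x unfolding cs_def fdef by (simp add: algebra_simps)
    have absW: "\<bar>f x\<bar> = cs \<bullet> x + s * df" if x: "x \<in> H0.Wk" for x
    proof -
      have "closure D \<subseteq> {x. cs \<bullet> x \<ge> - (s * df)}"
      proof (rule closure_minimal)
        show "D \<subseteq> {x. cs \<bullet> x \<ge> - (s * df)}" using s(2) sf by (force simp: algebra_simps)
        show "closed {x. cs \<bullet> x \<ge> - (s * df)}" by (rule closed_halfspace_ge)
      qed
      then have "s * f x \<ge> 0" using x clD sf by (force simp: algebra_simps)
      then have "\<bar>f x\<bar> = s * f x" using s(1) by auto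
      then show ?thesis using sf by simp
    qed
    have ne: "\<exists>x. \<forall>K\<in>A. a K \<bullet> x \<ge> b K" using xW pD by blast
    have zs: "cs \<bullet> u \<le> 0" if "\<forall>K\<in>A. a K \<bullet> u \<ge> 0" for u
      using z that unfolding H0.Rc_def cs_def by simp
    obtain y where y: "y \<in> H0.Wk" "\<forall>x\<in>H0.Wk. cs \<bullet> x \<le> cs \<bullet> y"
      using key_max[OF finA ne, of cs] zs unfolding H0.Wk_def by blast
    define M where "M = \<bar>f y\<bar>"
    have Mpos: "M > 0"
    proof -
      have "cs \<bullet> p \<le> cs \<bullet> y" using y pD DWk by blast
      moreover have "s * f p > 0" using s(2) pD by blast
      ultimately show ?thesis unfolding M_def using absW[OF y(1)] sf[of p] by linarith
    qed
    obtain L where L: "continuous_on D L" "\<forall>x\<in>D. exp (L x) = complex_of_real (f x) \<and> g x = exp (\<alpha> * L x)"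
      using assms(8) unfolding branch_pow_def by blast
    have fcont: "continuous_on D f" unfolding fdef by (intro continuous_intros)
    obtain w0 where w0: "\<forall>x\<in>D. L x = complex_of_real (ln \<bar>f x\<bar>) + w0"
      using branch_const[OF Dconn L(1) _ fcont s(2) s(1)] L(2) by blast
    define Z where "Z = exp (\<alpha> * (complex_of_real (ln M) + w0))"
    define G where "G x = exp (\<alpha> * (complex_of_real (ln \<bar>f x\<bar>) + w0))" for x
    have gD: "\<forall>x\<in>D. g x = G x" using L(2) w0 unfolding G_def by simp
    have cval: "(THE z. \<forall>x\<in>E. (g \<longlongrightarrow> z) (at x within D')) = Z"
      if D': "D' \<subseteq> D" "open D'" and E: "E \<noteq> {}" "E \<subseteq> closure D'" "\<forall>x\<in>E. \<bar>f x\<bar> = M" for D' E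
    proof (rule the_equality)
      show lim: "\<forall>x\<in>E. (g \<longlongrightarrow> Z) (at x within D')"
      proof
        fix x0 assume x0: "x0 \<in> E"
        have fx0: "\<bar>f x0\<bar> = M" using E x0 by blast
        have "isCont G x0" unfolding G_def fdef
          using fx0 Mpos unfolding fdef by (intro continuous_intros) auto
        then have "(G \<longlongrightarrow> G x0) (at x0)" unfolding isCont_def .
        then have "(G \<longlongrightarrow> G x0) (at x0 within D')" by (rule tendsto_within_subset) simp
        moreover have "G x0 = Z" unfolding G_def Z_def fx0 ..
        ultimately have "(G \<longlongrightarrow> Z) (at x0 within D')" by simp
        then show "(g \<longlongrightarrow> Z) (at x0 within D')"
          by (rule Lim_transform_within[OF _ zero_less_one]) (use gD D' in auto)
      qed
      fix z assume z: "\<forall>x\<in>E. (g \<longlongrightarrow> z) (at x within D')"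
      obtain x0 where x0: "x0 \<in> E" using E by blast
      have "x0 islimpt D'"
      proof (cases "x0 \<in> D'")
        case True
        then have "x0 \<in> interior D'" using D'(2) by (simp add: interior_open)
        then show ?thesis by (rule interior_limit_point)
      next
        case False
        then show ?thesis using x0 E(2) unfolding closure_def by blast
      qed
      then have nt: "at x0 within D' \<noteq> bot" using trivial_limit_within by blast
      show "z = Z" using tendsto_unique[OF nt] z lim x0 by blast
    qed
    have maxD: "max_set f D = {x\<in>H0.Wk. \<forall>z\<in>H0.Wk. cs \<bullet> z \<le> cs \<bullet> x}"
      unfolding max_set_def clD using absW by auto
    obtain F where F: "F \<noteq> {}" "F \<subseteq> {x\<in>H0.Wk. \<forall>z\<in>H0.Wk. cs \<bullet> z \<le> cs \<bullet> x}"
      "(THE F. face A F \<and> F \<subseteq> {x\<in>H0.Wk. \<forall>z\<in>H0.Wk. cs \<bullet> z \<le> cs \<bullet> x} \<and>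
         (\<forall>F'. face A F' \<and> F' \<subseteq> {x\<in>H0.Wk. \<forall>z\<in>H0.Wk. cs \<bullet> z \<le> cs \<bullet> x} \<longrightarrow> aff_dim F' \<le> aff_dim F)) = F"
      using H0.ext_face[OF y] by blast
    have esD: "ext_support A f D = F" unfolding ext_support_def maxD using F(3) .
    have FM: "\<forall>x\<in>F. \<bar>f x\<bar> = M"
    proof
      fix x assume x: "x \<in> F"
      then have xW': "x \<in> H0.Wk" "cs \<bullet> y \<le> cs \<bullet> x" using F(2) y(1) by auto
      then have "cs \<bullet> x = cs \<bullet> y" using y(2) by (auto intro: antisym)
      then show "\<bar>f x\<bar> = M" unfolding M_def using absW xW'(1) absW[OF y(1)] by simp
    qed
    have cD: "c_val A f g D = Z"
      unfolding c_val_def esD using cval[of D F] F(1,2) clD FM H0.open_Str DStr by auto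
    define BadT where "BadT = {t. {x. f0 x = t} \<in> A}"
    have lvl: "f0 (((t - d0) / (c0 \<bullet> c0)) *\<^sub>R c0) = t" for t
      unfolding f0def using c0nz by (simp add: inner_scaleR_right)
    have "inj_on (\<lambda>t. {x. f0 x = t}) BadT"
    proof (rule inj_onI)
      fix t t' assume eq: "{x. f0 x = t} = {x. f0 x = t'}"
      have "((t - d0) / (c0 \<bullet> c0)) *\<^sub>R c0 \<in> {x. f0 x = t}" using lvl[of t] by simp
      then have "((t - d0) / (c0 \<bullet> c0)) *\<^sub>R c0 \<in> {x. f0 x = t'}" using eq by simp
      then show "t = t'" using lvl[of t] by simp
    qed
    moreover have "(\<lambda>t. {x. f0 x = t}) ` BadT \<subseteq> A" unfolding BadT_def by blast
    ultimately have finBad: "finite BadT" using finA by (meson finite_imageD finite_subset)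
    define N where "N = max (max (f0 y) (f0 p)) (if BadT = {} then 0 else Max BadT)"
    have "\<forall>\<^sub>F t in at_top. t > N" by (rule eventually_gt_at_top)
    then show "\<forall>\<^sub>F t in at_top. c_val (insert {x. f0 x = t} A) f g {x \<in> D. f0 x < t} = c_val A f g D"
    proof (rule eventually_mono)
      fix t assume tN: "t > N"
      have tB: "t \<notin> BadT"
      proof
        assume "t \<in> BadT"
        then have "t \<le> Max BadT" using finBad by simp
        then show False using tN \<open>t \<in> BadT\<close> unfolding N_def by (auto split: if_splits)
      qed
      have ty: "f0 y < t" and tp: "f0 p < t" using tN unfolding N_def by auto
      define Kt where "Kt = {x. f0 x = t}"
      have KtA: "Kt \<notin> A" using tB unfolding BadT_def Kt_def by blast
      have Kt_eq: "Kt = {x. (- c0) \<bullet> x = d0 - t}" unfolding Kt_def f0def by (auto simp: algebra_simps)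
      define aT where "aT = a(Kt := - c0)"
      define bT where "bT = b(Kt := d0 - t)"
      have aTA: "aT K = a K" "bT K = b K" if "K \<in> A" for K
        using that KtA unfolding aT_def bT_def by auto
      have aTK: "aT Kt = - c0" "bT Kt = d0 - t" unfolding aT_def bT_def by auto
      have ltT: "(- c0) \<bullet> x > d0 - t \<longleftrightarrow> f0 x < t" for x unfolding f0def by auto
      have leT: "(- c0) \<bullet> x \<ge> d0 - t \<longleftrightarrow> f0 x \<le> t" for x unfolding f0def by auto
      interpret Ht: hplanes "insert Kt A" aT bT
      proof
        show "finite (insert Kt A)" using finA by simp
        show "\<And>K. K \<in> insert Kt A \<Longrightarrow> aT K \<noteq> 0" using ab aTA aTK c0nz by auto
        fix K assume K: "K \<in> insert Kt A"
        show "K = {x. aT K \<bullet> x = bT K}"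
        proof (cases "K = Kt")
          case True
          show ?thesis unfolding True aTK by (rule Kt_eq)
        next
          case False
          then have KA: "K \<in> A" using K by simp
          have e1: "aT K = a K" "bT K = b K" using aTA KA by auto
          show ?thesis unfolding e1 by (rule H0.rep[OF KA])
        qed
      next
        show "\<exists>x. \<forall>K\<in>insert Kt A. aT K \<bullet> x > bT K"
          using pS aTA aTK ltT[of p] tp by (intro exI[of _ p]) auto
      qed
      define Dt where "Dt = {x \<in> D. f0 x < t}"
      have StrT: "Ht.Str = Dt"
        unfolding Ht.Str_def Dt_def DStr H0.Str_def using aTA aTK ltT by auto
      have WkT: "Ht.Wk = {x\<in>H0.Wk. f0 x \<le> t}"
        unfolding Ht.Wk_def H0.Wk_def using aTA aTK leT by auto
      have clT: "closure Dt = Ht.Wk" using Ht.closure_Str StrT by simp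
      have yT: "y \<in> Ht.Wk" using y(1) ty WkT by simp
      have ymaxT: "\<forall>x\<in>Ht.Wk. cs \<bullet> x \<le> cs \<bullet> y" using y(2) WkT by simp
      have absT: "\<bar>f x\<bar> = cs \<bullet> x + s * df" if "x \<in> Ht.Wk" for x using absW that WkT by simp
      have maxT: "max_set f Dt = {x\<in>Ht.Wk. \<forall>z\<in>Ht.Wk. cs \<bullet> z \<le> cs \<bullet> x}"
        unfolding max_set_def clT using absT by auto
      obtain Ft where Ft: "Ft \<noteq> {}" "Ft \<subseteq> {x\<in>Ht.Wk. \<forall>z\<in>Ht.Wk. cs \<bullet> z \<le> cs \<bullet> x}"
        "(THE F. face (insert Kt A) F \<and> F \<subseteq> {x\<in>Ht.Wk. \<forall>z\<in>Ht.Wk. cs \<bullet> z \<le> cs \<bullet> x} \<and>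
           (\<forall>F'. face (insert Kt A) F' \<and> F' \<subseteq> {x\<in>Ht.Wk. \<forall>z\<in>Ht.Wk. cs \<bullet> z \<le> cs \<bullet> x} \<longrightarrow> aff_dim F' \<le> aff_dim F)) = Ft"
        using Ht.ext_face[OF yT ymaxT] by blast
      have esT: "ext_support (insert Kt A) f Dt = Ft" unfolding ext_support_def maxT using Ft(3) .
      have FtM: "\<forall>x\<in>Ft. \<bar>f x\<bar> = M"
      proof
        fix x assume x: "x \<in> Ft"
        then have xW': "x \<in> Ht.Wk" "cs \<bullet> y \<le> cs \<bullet> x" using Ft(2) yT by auto
        then have "cs \<bullet> x = cs \<bullet> y" using ymaxT by (auto intro: antisym)
        then show "\<bar>f x\<bar> = M" unfolding M_def using absT xW'(1) absT[OF yT] by simp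
      qed
      have DtD: "Dt \<subseteq> D" unfolding Dt_def by blast
      have cT: "c_val (insert Kt A) f g Dt = Z"
        unfolding c_val_def esT using cval[of Dt Ft] DtD Ft(1,2) clT FtM Ht.open_Str StrT by auto
      show "c_val (insert {x. f0 x = t} A) f g {x \<in> D. f0 x < t} = c_val A f g D"
        using cT cD unfolding Kt_def Dt_def by simp
    qed
  qed
  show ?thesis using part1 part2 part3 unfolding H_def by blast
qed

end
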